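(* Let $d\ge1$ and $k\ge1$ be integers and suppose that $G=(V,E)$ is a $k$-fold $\mathcal{R}_d$-circuit such that every $(k-1)$-fold $\mathcal{R}_d$-circuit contained in $G$ is $\mathcal{R}_d$-rigid. Then $G$ is balanced.
   Context: For a graph $G=(V,E)$ and a generic $p:V\to\mathbb{R}^d$ (coordinates algebraically independent over $\mathbb{Q}$), the rigidity matrix $R(G,p)$ has a row for each $uv\in E$ with $p(u)-p(v)$ in the $d$ columns of $u$, $p(v)-p(u)$ in those of $v$, zeros elsewhere. The generic $d$-dimensional rigidity matroid $\mathcal{R}_d$ is its row matroid (on the edge set of a complete graph containing $G$), with rank function $r_d$ and closure $\mathrm{cl}(X)=\{x: r_d(X\cup\{x\})=r_d(X)\}$. Graphs are identified with their edge sets, and an edge set is regarded as the graph it spans. A graph $H=(W,F)$ is $\mathcal{R}_d$-rigid if it is a complete graph on at most $d+1$ vertices or $r_d(F)=d|W|-\binom{d+1}{2}$. A set of edges is cyclic if it is a union of $\mathcal{R}_d$-circuits. A graph $(V,D)$ is a $k$-fold $\mathcal{R}_d$-circuit if $D$ is cyclic and $r_d(D)=|D|-k$. Its principal partition is the partition $\{A_1,\dots,A_\ell\}$ of $D$ such that $\{D\setminus A_i\}$ is exactly the set of $(k-1)$-fold $\mathcal{R}_d$-circuits contained in $D$. It is balanced if $r_d\big(\bigcap_{i=1}^\ell \mathrm{cl}(D\setminus A_i)\big)=\ell-k$. *)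

theory Defs
  imports Main "HOL.Real"
begin

definition Kedges :: "'a set \<Rightarrow> 'a set set" where
  "Kedges V = {e. e \<subseteq> V \<and> card e = 2}"

text \<open>A polynomial is a finite set M of monomials (exponent vectors supported on I)
  with rational coefficients c.\<close>
definition alg_indep_Q :: "'i set \<Rightarrow> ('i \<Rightarrow> real) \<Rightarrow> bool" where
  "alg_indep_Q I x \<longleftrightarrow>
     (\<forall>(M :: ('i \<Rightarrow> nat) set) (c :: ('i \<Rightarrow> nat) \<Rightarrow> rat).
        finite M \<longrightarrow> (\<forall>m\<in>M. \<forall>j. j \<notin> I \<longrightarrow> m j = 0) \<longrightarrow>
        (\<Sum>m\<in>M. of_rat (c m) * (\<Prod>j\<in>I. x j ^ m j)) = 0 \<longrightarrow>
        (\<forall>m\<in>M. c m = 0))"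

text \<open>A placement p : V \<rightarrow> R^d (coordinate i < d of vertex v is p v i) is generic
  if its coordinates are algebraically independent over Q.\<close>
definition generic :: "'a set \<Rightarrow> nat \<Rightarrow> ('a \<Rightarrow> nat \<Rightarrow> real) \<Rightarrow> bool" where
  "generic V d p \<longleftrightarrow> alg_indep_Q (V \<times> {..<d}) (\<lambda>(v,i). p v i)"

definition rig_entry :: "('a \<Rightarrow> nat \<Rightarrow> real) \<Rightarrow> 'a set \<Rightarrow> 'a \<Rightarrow> nat \<Rightarrow> real" where
  "rig_entry p e w i = (if w \<in> e then p w i - p (THE u. u \<in> e \<and> u \<noteq> w) i else 0)"

definition rows_indep :: "nat \<Rightarrow> ('a \<Rightarrow> nat \<Rightarrow> real) \<Rightarrow> 'a set set \<Rightarrow> bool" where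
  "rows_indep d p F \<longleftrightarrow>
     (\<forall>c :: 'a set \<Rightarrow> real.
        (\<forall>w i. i < d \<longrightarrow> (\<Sum>e\<in>F. c e * rig_entry p e w i) = 0) \<longrightarrow> (\<forall>e\<in>F. c e = 0))"

definition row_rank :: "nat \<Rightarrow> ('a \<Rightarrow> nat \<Rightarrow> real) \<Rightarrow> 'a set set \<Rightarrow> nat" where
  "row_rank d p F = Max {card I | I. I \<subseteq> F \<and> rows_indep d p I}"

text \<open>Rank function r_d of the generic d-dimensional rigidity matroid on the
  edge set of the complete graph on V (computed at a generic placement).\<close>
definition rd :: "'a set \<Rightarrow> nat \<Rightarrow> 'a set set \<Rightarrow> nat" where
  "rd V d F = row_rank d (SOME p. generic V d p) F"

definition rcl :: "'a set \<Rightarrow> nat \<Rightarrow> 'a set set \<Rightarrow> 'a set set" where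
  "rcl V d X = {x \<in> Kedges V. rd V d (X \<union> {x}) = rd V d X}"

definition rcircuit :: "'a set \<Rightarrow> nat \<Rightarrow> 'a set set \<Rightarrow> bool" where
  "rcircuit V d C \<longleftrightarrow> C \<subseteq> Kedges V \<and> rd V d C < card C \<and>
     (\<forall>C'. C' \<subset> C \<longrightarrow> rd V d C' = card C')"

definition rcyclic :: "'a set \<Rightarrow> nat \<Rightarrow> 'a set set \<Rightarrow> bool" where
  "rcyclic V d D \<longleftrightarrow> D \<subseteq> Kedges V \<and> D = \<Union>{C. C \<subseteq> D \<and> rcircuit V d C}"

definition kfold_circuit :: "'a set \<Rightarrow> nat \<Rightarrow> int \<Rightarrow> 'a set set \<Rightarrow> bool" where
  "kfold_circuit V d k D \<longleftrightarrow> rcyclic V d D \<and> int (rd V d D) = int (card D) - k"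

definition span_verts :: "'a set set \<Rightarrow> 'a set" where
  "span_verts F = \<Union>F"

definition rrigid :: "'a set \<Rightarrow> nat \<Rightarrow> 'a set set \<Rightarrow> bool" where
  "rrigid V d F \<longleftrightarrow>
     (F = Kedges (span_verts F) \<and> card (span_verts F) \<le> d + 1) \<or>
     int (rd V d F) = int d * int (card (span_verts F)) - int ((d + 1) choose 2)"

definition principal_partition :: "'a set \<Rightarrow> nat \<Rightarrow> int \<Rightarrow> 'a set set \<Rightarrow> 'a set set set \<Rightarrow> bool" where
  "principal_partition V d k D P \<longleftrightarrow>
     (\<forall>A\<in>P. A \<noteq> {}) \<and> \<Union>P = D \<and> (\<forall>A\<in>P. \<forall>B\<in>P. A \<noteq> B \<longrightarrow> A \<inter> B = {}) \<and>
     (\<lambda>A. D - A) ` P = {D'. D' \<subseteq> D \<and> kfold_circuit V d (k - 1) D'}"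

definition balanced :: "'a set \<Rightarrow> nat \<Rightarrow> int \<Rightarrow> 'a set set \<Rightarrow> bool" where
  "balanced V d k D \<longleftrightarrow>
     (\<exists>P. principal_partition V d k D P \<and>
          int (rd V d (\<Inter>A\<in>P. rcl V d (D - A))) = int (card P) - k)"

end

theory Submission
  imports Defs "Jordan_Normal_Form.Determinant" "HOL-Library.Function_Algebras"
    "HOL-Library.Countable" "HOL-Computational_Algebra.Polynomial" "HOL-Analysis.Continuum_Not_Denumerable"
begin

definition polyrep :: "'i set \<Rightarrow> (('i \<Rightarrow> real) \<Rightarrow> real) \<Rightarrow> bool" where
  "polyrep I f \<longleftrightarrow> (\<exists>M c. finite M \<and> (\<forall>m\<in>M. \<forall>j. j \<notin> I \<longrightarrow> m j = 0) \<and>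
     (\<forall>y. f y = (\<Sum>m\<in>M. of_rat (c m) * (\<Prod>j\<in>I. y j ^ m j))))"

lemma polyrep_generic:
  assumes "alg_indep_Q I x" "polyrep I f" "f y \<noteq> 0"
  shows "f x \<noteq> 0"
proof
  assume fx: "f x = 0"
  obtain M c where M: "finite M" "\<forall>m\<in>M. \<forall>j. j \<notin> I \<longrightarrow> m j = 0"
    "\<forall>y. f y = (\<Sum>m\<in>M. of_rat (c m) * (\<Prod>j\<in>I. y j ^ m j))"
    using assms(2) unfolding polyrep_def by blast
  have "\<forall>m\<in>M. c m = 0" using assms(1) M fx unfolding alg_indep_Q_def by metis
  then have "f y = 0" using M(3) by simp
  then show False using assms(3) by simp
qed

lemma polyrep_const: "polyrep I (\<lambda>y. of_rat q)"
  unfolding polyrep_def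
  by (rule exI[of _ "{\<lambda>_. 0}"], rule exI[of _ "\<lambda>_. q"]) auto

lemma polyrep_var:
  assumes "finite I" "j \<in> I"
  shows "polyrep I (\<lambda>y. y j)"
  unfolding polyrep_def
proof (rule exI[of _ "{\<lambda>i. if i = j then 1 else 0}"], rule exI[of _ "\<lambda>_. 1"], intro conjI allI ballI impI)
  fix y :: "_ \<Rightarrow> real"
  have "(\<Prod>i\<in>I. y i ^ (if i = j then 1 else 0)) = (\<Prod>i\<in>I. if i = j then y i else 1)"
    by (rule prod.cong) auto
  also have "\<dots> = y j" using assms by (simp add: prod.delta)
  finally show "y j = (\<Sum>m\<in>{\<lambda>i. if i = j then 1 else 0}. of_rat 1 * (\<Prod>i\<in>I. y i ^ m i))" by simp
qed (use assms in auto)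

lemma polyrep_add:
  assumes "polyrep I f" "polyrep I g"
  shows "polyrep I (\<lambda>y. f y + g y)"
proof -
  obtain M1 c1 where M1: "finite M1" "\<forall>m\<in>M1. \<forall>j. j \<notin> I \<longrightarrow> m j = 0"
    "\<forall>y. f y = (\<Sum>m\<in>M1. of_rat (c1 m) * (\<Prod>j\<in>I. y j ^ m j))"
    using assms(1) unfolding polyrep_def by blast
  obtain M2 c2 where M2: "finite M2" "\<forall>m\<in>M2. \<forall>j. j \<notin> I \<longrightarrow> m j = 0"
    "\<forall>y. g y = (\<Sum>m\<in>M2. of_rat (c2 m) * (\<Prod>j\<in>I. y j ^ m j))"
    using assms(2) unfolding polyrep_def by blast
  define c where "c m = (if m \<in> M1 then c1 m else 0) + (if m \<in> M2 then c2 m else 0)" for m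
  show ?thesis unfolding polyrep_def
  proof (rule exI[of _ "M1 \<union> M2"], rule exI[of _ c], intro conjI allI)
    fix y :: "_ \<Rightarrow> real"
    let ?mo = "\<lambda>m. (\<Prod>j\<in>I. y j ^ m j)"
    have e1: "(\<Sum>m\<in>M1 \<union> M2. (if m \<in> M1 then of_rat (c1 m) * ?mo m else 0)) = (\<Sum>m\<in>M1. of_rat (c1 m) * ?mo m)"
      by (rule sum.mono_neutral_cong_right) (use M1 M2 in auto)
    have e2: "(\<Sum>m\<in>M1 \<union> M2. (if m \<in> M2 then of_rat (c2 m) * ?mo m else 0)) = (\<Sum>m\<in>M2. of_rat (c2 m) * ?mo m)"
      by (rule sum.mono_neutral_cong_right) (use M1 M2 in auto)
    have "(\<Sum>m\<in>M1 \<union> M2. of_rat (c m) * ?mo m) =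
       (\<Sum>m\<in>M1 \<union> M2. (if m \<in> M1 then of_rat (c1 m) * ?mo m else 0) + (if m \<in> M2 then of_rat (c2 m) * ?mo m else 0))"
      by (rule sum.cong) (auto simp: c_def of_rat_add distrib_right)
    also have "\<dots> = f y + g y" by (simp add: sum.distrib e1 e2 M1 M2)
    finally show "f y + g y = (\<Sum>m\<in>M1 \<union> M2. of_rat (c m) * ?mo m)" by simp
  qed (use M1 M2 in auto)
qed

lemma polyrep_mult:
  assumes "polyrep I f" "polyrep I g"
  shows "polyrep I (\<lambda>y. f y * g y)"
proof -
  obtain M1 c1 where M1: "finite M1" "\<forall>m\<in>M1. \<forall>j. j \<notin> I \<longrightarrow> m j = 0"
    "\<forall>y. f y = (\<Sum>m\<in>M1. of_rat (c1 m) * (\<Prod>j\<in>I. y j ^ m j))"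
    using assms(1) unfolding polyrep_def by blast
  obtain M2 c2 where M2: "finite M2" "\<forall>m\<in>M2. \<forall>j. j \<notin> I \<longrightarrow> m j = 0"
    "\<forall>y. g y = (\<Sum>m\<in>M2. of_rat (c2 m) * (\<Prod>j\<in>I. y j ^ m j))"
    using assms(2) unfolding polyrep_def by blast
  define h where "h = (\<lambda>(a::'a \<Rightarrow> nat, b). (\<lambda>j. a j + b j))"
  define c where "c m = (\<Sum>q\<in>{q \<in> M1 \<times> M2. h q = m}. c1 (fst q) * c2 (snd q))" for m
  show ?thesis unfolding polyrep_def
  proof (rule exI[of _ "h ` (M1 \<times> M2)"], rule exI[of _ c], intro conjI allI)
    fix y :: "_ \<Rightarrow> real"
    let ?mo = "\<lambda>m. (\<Prod>j\<in>I. y j ^ m j)"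
    have mo: "?mo (h q) = ?mo (fst q) * ?mo (snd q)" for q
      by (cases q) (simp add: h_def power_add prod.distrib)
    have "f y * g y = (\<Sum>a\<in>M1. \<Sum>b\<in>M2. (of_rat (c1 a) * ?mo a) * (of_rat (c2 b) * ?mo b))"
      by (simp add: M1 M2 sum_product)
    also have "\<dots> = (\<Sum>q\<in>M1 \<times> M2. of_rat (c1 (fst q) * c2 (snd q)) * ?mo (h q))"
      by (simp add: sum.cartesian_product mo of_rat_mult mult_ac split_def)
    also have "\<dots> = (\<Sum>m\<in>h ` (M1 \<times> M2). \<Sum>q\<in>{q \<in> M1 \<times> M2. h q = m}. of_rat (c1 (fst q) * c2 (snd q)) * ?mo (h q))"
      by (rule sum.image_gen) (use M1 M2 in auto)
    also have "\<dots> = (\<Sum>m\<in>h ` (M1 \<times> M2). of_rat (c m) * ?mo m)"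
    proof (rule sum.cong[OF refl])
      fix m assume "m \<in> h ` (M1 \<times> M2)"
      have "(\<Sum>q\<in>{q \<in> M1 \<times> M2. h q = m}. of_rat (c1 (fst q) * c2 (snd q)) * ?mo (h q))
          = (\<Sum>q\<in>{q \<in> M1 \<times> M2. h q = m}. of_rat (c1 (fst q) * c2 (snd q)) * ?mo m)"
        by (rule sum.cong) auto
      also have "\<dots> = of_rat (c m) * ?mo m"
        by (simp add: c_def of_rat_sum sum_distrib_right)
      finally show "(\<Sum>q\<in>{q \<in> M1 \<times> M2. h q = m}. of_rat (c1 (fst q) * c2 (snd q)) * ?mo (h q)) = of_rat (c m) * ?mo m" .
    qed
    finally show "f y * g y = (\<Sum>m\<in>h ` (M1 \<times> M2). of_rat (c m) * ?mo m)" .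
  qed (use M1 M2 in \<open>auto simp: h_def\<close>)
qed

lemma polyrep_sum:
  assumes "finite S" "\<And>s. s \<in> S \<Longrightarrow> polyrep I (F s)"
  shows "polyrep I (\<lambda>y. \<Sum>s\<in>S. F s y)"
  using assms
proof (induction S rule: finite_induct)
  case empty
  then show ?case using polyrep_const[of I 0] by simp
next
  case (insert x F)
  then show ?case by (simp add: polyrep_add)
qed

lemma polyrep_prod:
  assumes "finite S" "\<And>s. s \<in> S \<Longrightarrow> polyrep I (F s)"
  shows "polyrep I (\<lambda>y. \<Prod>s\<in>S. F s y)"
  using assms
proof (induction S rule: finite_induct)
  case empty
  then show ?case using polyrep_const[of I 1] by simp
next
  case (insert x F)
  then show ?case by (simp add: polyrep_mult)
qed

lemma polyrep_diff:
  assumes "polyrep I f" "polyrep I g"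
  shows "polyrep I (\<lambda>y. f y - g y)"
proof -
  have "polyrep I (\<lambda>y. f y + (of_rat (-1) * g y))"
    by (intro polyrep_add polyrep_mult polyrep_const assms)
  then show ?thesis by simp
qed

inductive_set ring_gen :: "real set \<Rightarrow> real set" for X where
  rg_base: "x \<in> X \<Longrightarrow> x \<in> ring_gen X"
| rg_rat: "of_rat q \<in> ring_gen X"
| rg_add: "x \<in> ring_gen X \<Longrightarrow> y \<in> ring_gen X \<Longrightarrow> x + y \<in> ring_gen X"
| rg_mult: "x \<in> ring_gen X \<Longrightarrow> y \<in> ring_gen X \<Longrightarrow> x * y \<in> ring_gen X"

datatype rexpr = RLeaf nat | RRat rat | RAdd rexpr rexpr | RMul rexpr rexpr

instance rexpr :: countable by countable_datatype

fun reval :: "real set \<Rightarrow> rexpr \<Rightarrow> real" where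
  "reval X (RLeaf n) = from_nat_into X n"
| "reval X (RRat q) = of_rat q"
| "reval X (RAdd a b) = reval X a + reval X b"
| "reval X (RMul a b) = reval X a * reval X b"

lemma ring_gen_countable:
  assumes "countable X"
  shows "countable (ring_gen X)"
proof -
  have "ring_gen X \<subseteq> range (reval X)"
  proof
    fix x assume "x \<in> ring_gen X"
    then show "x \<in> range (reval X)"
    proof induction
      case (rg_base x)
      then obtain n where "from_nat_into X n = x" using from_nat_into_surj[OF assms] by auto
      then show ?case by (intro range_eqI[of _ _ "RLeaf n"]) simp
    next
      case (rg_rat q)
      then show ?case by (intro range_eqI[of _ _ "RRat q"]) simp
    next
      case (rg_add x y)
      then obtain a b where "x = reval X a" "y = reval X b" by blast
      then show ?case by (intro range_eqI[of _ _ "RAdd a b"]) simp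
    next
      case (rg_mult x y)
      then obtain a b where "x = reval X a" "y = reval X b" by blast
      then show ?case by (intro range_eqI[of _ _ "RMul a b"]) simp
    qed
  qed
  moreover have "countable (range (reval X))" by simp
  ultimately show ?thesis by (rule countable_subset)
qed

lemma ring_gen_sum: "finite S \<Longrightarrow> (\<And>s. s \<in> S \<Longrightarrow> f s \<in> ring_gen X) \<Longrightarrow> (\<Sum>s\<in>S. f s) \<in> ring_gen X"
proof (induction S rule: finite_induct)
  case empty
  then show ?case using rg_rat[of 0 X] by simp
next
  case (insert x F)
  then show ?case by (simp add: rg_add)
qed

lemma ring_gen_prod: "finite S \<Longrightarrow> (\<And>s. s \<in> S \<Longrightarrow> f s \<in> ring_gen X) \<Longrightarrow> (\<Prod>s\<in>S. f s) \<in> ring_gen X"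
proof (induction S rule: finite_induct)
  case empty
  then show ?case using rg_rat[of 1 X] by simp
next
  case (insert x F)
  then show ?case by (simp add: rg_mult)
qed

lemma ring_gen_power: "x \<in> ring_gen X \<Longrightarrow> x ^ n \<in> ring_gen X"
  by (induction n) (use rg_rat[of 1 X] rg_mult in auto)

lemma alg_indep_empty: "alg_indep_Q {} x"
  unfolding alg_indep_Q_def
proof (intro allI impI ballI)
  fix M :: "('a \<Rightarrow> nat) set" and c m
  assume "finite M" "\<forall>m\<in>M. \<forall>j. j \<notin> {} \<longrightarrow> m j = 0"
    "(\<Sum>m\<in>M. real_of_rat (c m) * (\<Prod>j\<in>{}. x j ^ m j)) = 0" "m \<in> M"
  then have "\<And>m'. m' \<in> M \<Longrightarrow> m' = (\<lambda>_. 0)" by (auto intro!: ext)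
  then have M: "M = {\<lambda>_. 0}" using \<open>m \<in> M\<close> by blast
  then show "c m = 0" using \<open>m \<in> M\<close> \<open>(\<Sum>m\<in>M. _) = 0\<close> by simp
qed

lemma alg_indep_insert:
  assumes fin: "finite I" and ind: "alg_indep_Q I x" and a: "a \<notin> I"
  shows "\<exists>t. alg_indep_Q (insert a I) (x(a := t))"
proof -
  define R where "R = ring_gen (x ` I)"
  have cR: "countable R" unfolding R_def by (intro ring_gen_countable countable_image countable_finite fin)
  define PR where "PR = {P :: real poly. P \<noteq> 0 \<and> (\<forall>i. coeff P i \<in> R)}"
  have "PR \<subseteq> Poly ` lists R"
  proof
    fix P assume "P \<in> PR"
    then have "coeffs P \<in> lists R" unfolding PR_def
      by (auto simp: coeffs_def)
    then show "P \<in> Poly ` lists R" by (metis Poly_coeffs imageI)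
  qed
  then have cPR: "countable PR" using cR by (metis countable_image countable_lists countable_subset)
  define Bad where "Bad = (\<Union>P\<in>PR. {t. poly P t = 0})"
  have "countable Bad" unfolding Bad_def
    by (rule countable_UN[OF cPR]) (auto simp: PR_def intro: countable_finite poly_roots_finite)
  then have "Bad \<noteq> UNIV" using uncountable_UNIV_real by auto
  then obtain t where t: "t \<notin> Bad" by auto
  show ?thesis
  proof (rule exI[of _ t], unfold alg_indep_Q_def, intro allI impI ballI, rule ccontr)
    fix M :: "('a \<Rightarrow> nat) set" and c m0
    assume M: "finite M" and supp: "\<forall>m\<in>M. \<forall>j. j \<notin> insert a I \<longrightarrow> m j = 0"
      and z: "(\<Sum>m\<in>M. real_of_rat (c m) * (\<Prod>j\<in>insert a I. (x(a := t)) j ^ m j)) = 0"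
      and m0: "m0 \<in> M" and c0: "c m0 \<noteq> 0"
    let ?mo = "\<lambda>m. (\<Prod>j\<in>I. x j ^ m j)"
    define P where "P = (\<Sum>m\<in>M. monom (of_rat (c m) * ?mo m) (m a))"
    have "poly P t = (\<Sum>m\<in>M. of_rat (c m) * ?mo m * t ^ (m a))"
      by (simp add: P_def poly_sum poly_monom)
    also have "\<dots> = (\<Sum>m\<in>M. real_of_rat (c m) * (\<Prod>j\<in>insert a I. (x(a := t)) j ^ m j))"
    proof (rule sum.cong[OF refl])
      fix m
      have "(\<Prod>j\<in>I. (x(a := t)) j ^ m j) = ?mo m"
        by (rule prod.cong) (use a in auto)
      then show "of_rat (c m) * ?mo m * t ^ (m a) = real_of_rat (c m) * (\<Prod>j\<in>insert a I. (x(a := t)) j ^ m j)"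
        using fin a by (simp add: prod.insert mult_ac)
    qed
    finally have Pt: "poly P t = 0" using z by simp
    have coeffP: "coeff P i = (\<Sum>m\<in>{m\<in>M. m a = i}. of_rat (c m) * ?mo m)" for i
    proof -
      have "coeff P i = (\<Sum>m\<in>M. if m a = i then of_rat (c m) * ?mo m else 0)"
        by (simp add: P_def coeff_sum coeff_monom eq_commute)
      also have "\<dots> = (\<Sum>m\<in>{m\<in>M. m a = i}. of_rat (c m) * ?mo m)"
        by (simp add: sum.inter_filter[symmetric] M)
      finally show ?thesis .
    qed
    have inR: "coeff P i \<in> R" for i
      unfolding coeffP R_def
    proof (rule ring_gen_sum)
      show "finite {m \<in> M. m a = i}" using M by simp
      fix m
      have "(\<Prod>j\<in>I. x j ^ m j) \<in> ring_gen (x ` I)"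
        by (rule ring_gen_prod[OF fin]) (rule ring_gen_power, rule rg_base, simp)
      then show "of_rat (c m) * (\<Prod>j\<in>I. x j ^ m j) \<in> ring_gen (x ` I)"
        by (rule rg_mult[OF rg_rat])
    qed
    define k where "k = m0 a"
    define Mk where "Mk = {m\<in>M. m a = k}"
    define h where "h m = m(a := 0)" for m :: "'a \<Rightarrow> nat"
    have injh: "inj_on h Mk"
    proof
      fix m1 m2 assume "m1 \<in> Mk" "m2 \<in> Mk" "h m1 = h m2"
      show "m1 = m2"
      proof (rule ext)
        fix j
        show "m1 j = m2 j"
        proof (cases "j = a")
          case True
          then show ?thesis using \<open>m1 \<in> Mk\<close> \<open>m2 \<in> Mk\<close> by (simp add: Mk_def)
        next
          case False
          then show ?thesis using fun_cong[OF \<open>h m1 = h m2\<close>, of j] by (simp add: h_def)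
        qed
      qed
    qed
    define c' where "c' n = c (n(a := k))" for n
    have "coeff P k \<noteq> 0"
    proof
      assume ck: "coeff P k = 0"
      have "(\<Sum>n\<in>h ` Mk. of_rat (c' n) * ?mo n) = (\<Sum>m\<in>Mk. of_rat (c' (h m)) * ?mo (h m))"
        by (simp add: sum.reindex[OF injh])
      also have "\<dots> = (\<Sum>m\<in>Mk. of_rat (c m) * ?mo m)"
      proof (rule sum.cong[OF refl])
        fix m assume "m \<in> Mk"
        then have "(h m) (a := k) = m" unfolding h_def Mk_def by auto
        moreover have "?mo (h m) = ?mo m" by (rule prod.cong) (use a in \<open>auto simp: h_def\<close>)
        ultimately show "of_rat (c' (h m)) * ?mo (h m) = of_rat (c m) * ?mo m" by (simp add: c'_def)
      qed
      also have "\<dots> = 0" using ck coeffP[of k] Mk_def by simp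
      finally have s0: "(\<Sum>n\<in>h ` Mk. of_rat (c' n) * ?mo n) = 0" .
      have "finite (h ` Mk)" using M Mk_def by simp
      moreover have "\<forall>n\<in>h ` Mk. \<forall>j. j \<notin> I \<longrightarrow> n j = 0"
        using supp unfolding Mk_def h_def by auto
      ultimately have "\<forall>n\<in>h ` Mk. c' n = 0" using ind s0 unfolding alg_indep_Q_def by blast
      moreover have "m0 \<in> Mk" using m0 by (simp add: Mk_def k_def)
      moreover have "c' (h m0) = c m0" by (simp add: c'_def h_def k_def)
      ultimately show False using c0 by auto
    qed
    then have "P \<in> PR" unfolding PR_def using inR by auto
    then have "t \<in> Bad" unfolding Bad_def using Pt by blast
    then show False using t by simp
  qed
qed

lemma alg_indep_exists: "finite I \<Longrightarrow> \<exists>x. alg_indep_Q I x"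
proof (induction I rule: finite_induct)
  case empty
  show ?case using alg_indep_empty by (rule exI)
next
  case (insert a F)
  then obtain x where "alg_indep_Q F x" by blast
  from alg_indep_insert[OF insert(1) this insert(2)] show ?case by blast
qed

lemma generic_exists:
  assumes "finite V"
  shows "\<exists>p. generic V d p"
proof -
  have "finite (V \<times> {..<d})" using assms by simp
  then obtain x where x: "alg_indep_Q (V \<times> {..<d}) x" using alg_indep_exists by blast
  have "(\<lambda>(v, i). x (v, i)) = x" by (simp add: case_prod_eta)
  then have "generic V d (\<lambda>v i. x (v, i))" unfolding generic_def using x by simp
  then show ?thesis by blast
qed

definition gp :: "'a set \<Rightarrow> nat \<Rightarrow> 'a \<Rightarrow> nat \<Rightarrow> real" where
  "gp V d = (SOME p. generic V d p)"

lemma gp_generic: "finite V \<Longrightarrow> generic V d (gp V d)"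
  unfolding gp_def using generic_exists[of V d] by (rule someI_ex[rotated]) 

lemma rd_gp: "rd V d F = row_rank d (gp V d) F"
  unfolding rd_def gp_def ..

lemma det_kernel:
  fixes A :: "real mat"
  assumes A: "A \<in> carrier_mat n n" and d: "det A \<noteq> 0"
    and v: "\<forall>j<n. (\<Sum>i<n. A $$ (j, i) * v i) = 0" and i: "i < n"
  shows "v i = 0"
proof -
  define w where "w = vec n v"
  have w: "w \<in> carrier_vec n" unfolding w_def by simp
  have "A *\<^sub>v w = 0\<^sub>v n"
  proof (rule eq_vecI)
    fix j assume "j < dim_vec (0\<^sub>v n :: real vec)"
    then have j: "j < n" by simp
    have "(A *\<^sub>v w) $ j = (\<Sum>i\<in>{0..<n}. A $$ (j, i) * v i)"
      using A j by (simp add: mult_mat_vec_def scalar_prod_def w_def)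
    also have "\<dots> = 0" using v j by (simp add: atLeast0LessThan)
    finally show "(A *\<^sub>v w) $ j = 0\<^sub>v n $ j" using j by simp
  qed (use A in simp)
  then have "w = 0\<^sub>v n" using det_0_iff_vec_prod_zero[OF A] d w by blast
  then show ?thesis using i unfolding w_def by (metis index_vec index_zero_vec(1))
qed

lemma det_AI:
  assumes V: "finite V" and us: "distinct us" "set us \<subseteq> V" "length us = Suc m" and md: "m \<le> d"
  shows "det (mat m m (\<lambda>(j, i). gp V d (us ! Suc i) j - gp V d (us ! 0) j)) \<noteq> 0"
proof -
  define I where "I = V \<times> {..<d}"
  define f where "f y = det (mat m m (\<lambda>(j, i). y (us ! Suc i, j) - y (us ! 0, j)))" for y :: "'a \<times> nat \<Rightarrow> real"
  have f_eq: "f y = (\<Sum>\<sigma>\<in>{\<sigma>. \<sigma> permutes {0..<m}}. of_rat (of_int (sign \<sigma>)) *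
      (\<Prod>i\<in>{0..<m}. y (us ! Suc (\<sigma> i), i) - y (us ! 0, i)))" for y
    unfolding f_def det_def
    by (auto intro!: sum.cong prod.cong simp: permutes_in_image)
  have fe: "f = (\<lambda>y. (\<Sum>\<sigma>\<in>{\<sigma>. \<sigma> permutes {0..<m}}. of_rat (of_int (sign \<sigma>)) *
      (\<Prod>i\<in>{0..<m}. y (us ! Suc (\<sigma> i), i) - y (us ! 0, i))))"
    by (rule ext) (rule f_eq)
  have pr: "polyrep I f"
  proof -
    have "polyrep I (\<lambda>y. \<Sum>\<sigma>\<in>{\<sigma>. \<sigma> permutes {0..<m}}. of_rat (of_int (sign \<sigma>)) *
      (\<Prod>i\<in>{0..<m}. y (us ! Suc (\<sigma> i), i) - y (us ! 0, i)))"
    proof (rule polyrep_sum)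
      show "finite {\<sigma>. \<sigma> permutes {0..<m}}" by (simp add: finite_permutations)
      fix \<sigma> assume s: "\<sigma> \<in> {\<sigma>. \<sigma> permutes {0..<m}}"
      show "polyrep I (\<lambda>y. of_rat (of_int (sign \<sigma>)) * (\<Prod>i\<in>{0..<m}. y (us ! Suc (\<sigma> i), i) - y (us ! 0, i)))"
      proof (rule polyrep_mult[OF polyrep_const], rule polyrep_prod)
        fix i assume i: "i \<in> {0..<m}"
        then have "\<sigma> i < m" using s by (auto simp: permutes_in_image)
        then have "us ! Suc (\<sigma> i) \<in> V" "us ! 0 \<in> V" using us by auto
        moreover have "i < d" using i md by auto
        ultimately have "(us ! Suc (\<sigma> i), i) \<in> I" "(us ! 0, i) \<in> I" unfolding I_def by auto
        moreover have "finite I" unfolding I_def using V by simp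
        ultimately show "polyrep I (\<lambda>y. y (us ! Suc (\<sigma> i), i) - y (us ! 0, i))"
          by (intro polyrep_diff polyrep_var)
      qed simp
    qed
    then show ?thesis unfolding fe .
  qed
  define y0 where "y0 = (\<lambda>(w, j). if \<exists>i<m. w = us ! Suc i \<and> j = i then 1 else (0::real))"
  have "mat m m (\<lambda>(j, i). y0 (us ! Suc i, j) - y0 (us ! 0, j)) = 1\<^sub>m m"
  proof (rule eq_matI)
    fix j i assume j: "j < dim_row (1\<^sub>m m :: real mat)" and i: "i < dim_col (1\<^sub>m m :: real mat)"
    then have jm: "j < m" and im: "i < m" by auto
    have a0: "\<forall>i'<m. (us ! Suc i = us ! Suc i') = (i = i')"
      using us im by (simp add: nth_eq_iff_index_eq)
    then have a: "(\<exists>i'<m. us ! Suc i = us ! Suc i' \<and> j = i') \<longleftrightarrow> j = i"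
      using im by blast
    have b0: "\<forall>i'<m. us ! 0 \<noteq> us ! Suc i'"
      using us by (simp add: nth_eq_iff_index_eq)
    then have b: "\<not> (\<exists>i'<m. us ! 0 = us ! Suc i' \<and> j = i')" by blast
    show "mat m m (\<lambda>(j, i). y0 (us ! Suc i, j) - y0 (us ! 0, j)) $$ (j, i) = 1\<^sub>m m $$ (j, i)"
      using jm im a b by (simp add: y0_def)
  qed auto
  then have "f y0 \<noteq> 0" unfolding f_def by simp
  moreover have "alg_indep_Q I (\<lambda>(v, i). gp V d v i)"
    using gp_generic[OF V, of d] unfolding generic_def I_def .
  ultimately have "f (\<lambda>(v, i). gp V d v i) \<noteq> 0" using polyrep_generic[OF _ pr] by blast
  then show ?thesis unfolding f_def by simp
qed

lemma AI_indep:
  assumes V: "finite V" and us: "distinct us" "set us \<subseteq> V" "length us = Suc m" and md: "m \<le> d"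
    and lam: "\<forall>j<d. (\<Sum>i<m. l i * (gp V d (us ! Suc i) j - gp V d (us ! 0) j)) = 0"
    and i: "i < m"
  shows "l i = 0"
proof -
  let ?A = "mat m m (\<lambda>(j, i). gp V d (us ! Suc i) j - gp V d (us ! 0) j)"
  have "\<forall>j<m. (\<Sum>i<m. ?A $$ (j, i) * l i) = 0"
  proof (intro allI impI)
    fix j assume j: "j < m"
    have "(\<Sum>i<m. ?A $$ (j, i) * l i) = (\<Sum>i<m. l i * (gp V d (us ! Suc i) j - gp V d (us ! 0) j))"
      using j by (intro sum.cong) auto
    also have "\<dots> = 0" using lam j md by auto
    finally show "(\<Sum>i<m. ?A $$ (j, i) * l i) = 0" .
  qed
  then show ?thesis using det_kernel[of ?A m] det_AI[OF assms(1-5)] i by auto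
qed

lemma AI_span:
  assumes V: "finite V" and us: "distinct us" "set us \<subseteq> V" "length us = Suc d"
    and s: "\<forall>i<d. (\<Sum>j<d. s j * (gp V d (us ! Suc i) j - gp V d (us ! 0) j)) = 0"
    and j: "j < d"
  shows "s j = 0"
proof -
  let ?A = "mat d d (\<lambda>(j, i). gp V d (us ! Suc i) j - gp V d (us ! 0) j)"
  have A: "?A \<in> carrier_mat d d" by simp
  have "det (transpose_mat ?A) \<noteq> 0" using det_AI[OF assms(1-4) le_refl] det_transpose[OF A] by simp
  moreover have "\<forall>i<d. (\<Sum>j<d. transpose_mat ?A $$ (i, j) * s j) = 0"
  proof (intro allI impI)
    fix i assume i: "i < d"
    have "(\<Sum>j<d. transpose_mat ?A $$ (i, j) * s j) = (\<Sum>j<d. s j * (gp V d (us ! Suc i) j - gp V d (us ! 0) j))"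
      using i by (intro sum.cong) auto
    also have "\<dots> = 0" using s i by auto
    finally show "(\<Sum>j<d. transpose_mat ?A $$ (i, j) * s j) = 0" .
  qed
  ultimately show ?thesis using det_kernel[of "transpose_mat ?A" d] j by auto
qed

definition fsc :: "real \<Rightarrow> ('b \<Rightarrow> real) \<Rightarrow> 'b \<Rightarrow> real" where
  "fsc c f = (\<lambda>x. c * f x)"

global_interpretation fv: vector_space "fsc :: real \<Rightarrow> ('b \<Rightarrow> real) \<Rightarrow> 'b \<Rightarrow> real"
  by unfold_locales (auto simp: fsc_def fun_eq_iff algebra_simps)

lemma sum_fun_apply: "(\<Sum>e\<in>S. f e) x = (\<Sum>e\<in>S. f e x)"
  by (induction S rule: infinite_finite_induct) auto

lemma fsc_apply[simp]: "fsc c f x = c * f x"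
  by (simp add: fsc_def)

definition rv :: "nat \<Rightarrow> ('a \<Rightarrow> nat \<Rightarrow> real) \<Rightarrow> 'a set \<Rightarrow> ('a \<times> nat \<Rightarrow> real)" where
  "rv d p e = (\<lambda>(w, i). if i < d then rig_entry p e w i else 0)"

lemma rv_sum_apply:
  "(\<Sum>e\<in>S. fsc (c e) (rv d p e)) (w, i) = (if i < d then (\<Sum>e\<in>S. c e * rig_entry p e w i) else 0)"
  by (simp add: sum_fun_apply rv_def)

lemma rows_indepD:
  assumes "rows_indep d p F" "\<And>w i. i < d \<Longrightarrow> (\<Sum>e\<in>F. c e * rig_entry p e w i) = 0" "e \<in> F"
  shows "c e = 0"
  using assms unfolding rows_indep_def by (elim allE[of _ c]) auto

lemma rows_indep_subset:
  assumes "rows_indep d p F" "G \<subseteq> F" "finite F"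
  shows "rows_indep d p G"
  unfolding rows_indep_def
proof (intro allI impI ballI)
  fix c :: "'a set \<Rightarrow> real" and e
  assume h: "\<forall>w i. i < d \<longrightarrow> (\<Sum>e\<in>G. c e * rig_entry p e w i) = 0" and e: "e \<in> G"
  define c' where "c' f = (if f \<in> G then c f else 0)" for f
  have "\<forall>w i. i < d \<longrightarrow> (\<Sum>e\<in>F. c' e * rig_entry p e w i) = 0"
  proof (intro allI impI)
    fix w i assume "i < d"
    have "(\<Sum>e\<in>F. c' e * rig_entry p e w i) = (\<Sum>e\<in>F. if e \<in> G then c e * rig_entry p e w i else 0)"
      by (rule sum.cong) (auto simp: c'_def)
    also have "\<dots> = (\<Sum>e\<in>F \<inter> G. c e * rig_entry p e w i)" by (rule sum.inter_restrict[OF assms(3), symmetric])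
    also have "F \<inter> G = G" using assms(2) by auto
    finally have "(\<Sum>e\<in>F. c' e * rig_entry p e w i) = (\<Sum>e\<in>G. c e * rig_entry p e w i)" .
    then show "(\<Sum>e\<in>F. c' e * rig_entry p e w i) = 0" using h \<open>i < d\<close> by simp
  qed
  then have "c' e = 0" using assms(1) e assms(2) unfolding rows_indep_def by blast
  then show "c e = 0" using e by (simp add: c'_def)
qed

lemma rows_indep_empty: "rows_indep d p {}"
  unfolding rows_indep_def by simp

lemma rank_set_finite:
  assumes "finite F"
  shows "finite {card I | I. I \<subseteq> F \<and> rows_indep d p I}" "{card I | I. I \<subseteq> F \<and> rows_indep d p I} \<noteq> {}"
proof -
  have "{card I | I. I \<subseteq> F \<and> rows_indep d p I} \<subseteq> card ` Pow F" by auto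
  moreover have "finite (card ` Pow F)" using assms by simp
  ultimately show "finite {card I | I. I \<subseteq> F \<and> rows_indep d p I}" by (rule finite_subset)
  have "card {} \<in> {card I | I. I \<subseteq> F \<and> rows_indep d p I}"
    unfolding mem_Collect_eq by (rule exI[of _ "{}"]) (simp add: rows_indep_empty)
  then show "{card I | I. I \<subseteq> F \<and> rows_indep d p I} \<noteq> {}" by auto
qed

lemma rank_ge:
  assumes "finite F" "I \<subseteq> F" "rows_indep d p I"
  shows "card I \<le> row_rank d p F"
  unfolding row_rank_def
proof (rule Max_ge[OF rank_set_finite(1)[OF assms(1)]])
  show "card I \<in> {card I | I. I \<subseteq> F \<and> rows_indep d p I}"
    unfolding mem_Collect_eq by (rule exI[of _ I]) (simp add: assms)
qed

lemma rank_obtain: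
  assumes "finite F"
  obtains I where "I \<subseteq> F" "rows_indep d p I" "card I = row_rank d p F"
proof -
  have "row_rank d p F \<in> {card I | I. I \<subseteq> F \<and> rows_indep d p I}"
    unfolding row_rank_def using rank_set_finite[OF assms] by (rule Max_in)
  then obtain I where "row_rank d p F = card I" "I \<subseteq> F" "rows_indep d p I" by auto
  then show ?thesis using that by simp
qed

lemma rank_le_card: "finite F \<Longrightarrow> row_rank d p F \<le> card F"
proof -
  assume F: "finite F"
  obtain I where I: "I \<subseteq> F" "rows_indep d p I" "card I = row_rank d p F" using rank_obtain[OF F] .
  from card_mono[OF F I(1)] I(3) show ?thesis by simp
qed

lemma rank_mono: "finite G \<Longrightarrow> F \<subseteq> G \<Longrightarrow> row_rank d p F \<le> row_rank d p G"
proof -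
  assume G: "finite G" and FG: "F \<subseteq> G"
  then have F: "finite F" by (rule finite_subset[rotated])
  obtain I where I: "I \<subseteq> F" "rows_indep d p I" "card I = row_rank d p F" using rank_obtain[OF F] .
  have "I \<subseteq> G" using I(1) FG by simp
  then show ?thesis using rank_ge[OF G _ I(2)] I(3) by simp
qed

lemma rank_eq_card_iff:
  assumes "finite F"
  shows "row_rank d p F = card F \<longleftrightarrow> rows_indep d p F"
proof
  assume "row_rank d p F = card F"
  moreover obtain I where "I \<subseteq> F" "rows_indep d p I" "card I = row_rank d p F" using rank_obtain[OF assms] .
  ultimately have "I \<subseteq> F" "card I = card F" "rows_indep d p I" by simp_all
  then have "I = F" using assms card_subset_eq by blast
  then show "rows_indep d p F" using \<open>rows_indep d p I\<close> by simp
next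
  assume "rows_indep d p F"
  then show "row_rank d p F = card F" using rank_ge[OF assms subset_refl, of d p] rank_le_card[OF assms, of d p] by simp
qed

lemma rank_insert_le: "finite F \<Longrightarrow> row_rank d p (insert e F) \<le> row_rank d p F + 1"
proof -
  assume F: "finite F"
  have F': "finite (insert e F)" using F by simp
  obtain I where I: "I \<subseteq> insert e F" "rows_indep d p I" "card I = row_rank d p (insert e F)"
    using rank_obtain[OF F'] .
  have fI: "finite I" using F' I(1) by (rule finite_subset[rotated])
  have "I - {e} \<subseteq> F" using I by auto
  moreover have "rows_indep d p (I - {e})" using rows_indep_subset[OF I(2) _ fI] by blast
  ultimately have "card (I - {e}) \<le> row_rank d p F" using rank_ge[OF F] by blast
  moreover have "card I \<le> card (I - {e}) + 1"
  proof (cases "e \<in> I")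
    case True
    then show ?thesis using card_Suc_Diff1[OF fI True] by simp
  next
    case False
    then show ?thesis by simp
  qed
  ultimately show ?thesis using I(3) by simp
qed

lemma indep_to_fv:
  assumes "rows_indep d p J" "finite J"
  shows "inj_on (rv d p) J \<and> fv.independent (rv d p ` J)"
proof
  show inj: "inj_on (rv d p) J"
  proof
    fix e1 e2 assume e: "e1 \<in> J" "e2 \<in> J" "rv d p e1 = rv d p e2"
    show "e1 = e2"
    proof (rule ccontr)
      assume ne: "e1 \<noteq> e2"
      define c where "c e = (if e = e1 then 1 else if e = e2 then -1 else (0::real))" for e
      have "\<forall>w i. i < d \<longrightarrow> (\<Sum>e\<in>J. c e * rig_entry p e w i) = 0"
      proof (intro allI impI)
        fix w i assume i: "i < d"
        have eq: "rig_entry p e1 w i = rig_entry p e2 w i"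
          using fun_cong[OF e(3), of "(w, i)"] i by (simp add: rv_def)
        have "(\<Sum>e\<in>J. c e * rig_entry p e w i) =
            (\<Sum>e\<in>J. (if e = e1 then rig_entry p e1 w i else 0) + (if e = e2 then - rig_entry p e2 w i else 0))"
          by (rule sum.cong) (auto simp: c_def ne)
        also have "\<dots> = rig_entry p e1 w i - rig_entry p e2 w i"
          using e assms(2) by (simp add: sum.distrib)
        finally show "(\<Sum>e\<in>J. c e * rig_entry p e w i) = 0" using eq by simp
      qed
      then have "c e1 = 0" using assms(1) e(1) unfolding rows_indep_def by blast
      then show False by (simp add: c_def)
    qed
  qed
  show "fv.independent (rv d p ` J)"
    unfolding fv.dependent_finite[OF finite_imageI[OF assms(2)]]
  proof (intro notI, elim exE conjE bexE)
    fix c v assume s: "(\<Sum>v\<in>rv d p ` J. fsc (c v) v) = 0" and v: "v \<in> rv d p ` J" and cv: "c v \<noteq> 0"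
    have s': "(\<Sum>e\<in>J. fsc (c (rv d p e)) (rv d p e)) = 0"
      using s by (simp add: sum.reindex[OF inj])
    have z: "(\<Sum>e\<in>J. c (rv d p e) * rig_entry p e w i) = 0" if "i < d" for w i
    proof -
      have "(\<Sum>e\<in>J. fsc (c (rv d p e)) (rv d p e)) (w, i) = 0" using s' by simp
      moreover have "(\<Sum>e\<in>J. fsc (c (rv d p e)) (rv d p e)) (w, i) = (\<Sum>e\<in>J. c (rv d p e) * rig_entry p e w i)"
        using rv_sum_apply[where S=J and c="\<lambda>e. c (rv d p e)" and d=d and p=p and w=w and i=i] that by simp
      ultimately show ?thesis by simp
    qed
    obtain e where e: "e \<in> J" "v = rv d p e" using v by blast
    have "c (rv d p e) = 0" by (rule rows_indepD[OF assms(1) z e(1)])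
    then show False using e cv by simp
  qed
qed

lemma maximal_spans:
  assumes J: "rows_indep d p J" "finite J" and eF: "\<not> rows_indep d p (insert e J)" "e \<notin> J"
  shows "rv d p e \<in> fv.span (rv d p ` J)"
proof -
  obtain c where c: "\<forall>w i. i < d \<longrightarrow> (\<Sum>f\<in>insert e J. c f * rig_entry p f w i) = 0"
    and nz: "\<exists>f\<in>insert e J. c f \<noteq> 0"
    using eF(1) unfolding rows_indep_def by blast
  have sp: "(\<Sum>f\<in>insert e J. c f * rig_entry p f w i) = c e * rig_entry p e w i + (\<Sum>f\<in>J. c f * rig_entry p f w i)" for w i
    using J(2) eF(2) by simp
  have ce: "c e \<noteq> 0"
  proof
    assume "c e = 0"
    then have z: "(\<Sum>f\<in>J. c f * rig_entry p f w i) = 0" if "i < d" for w i using c sp that by simp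
    have "\<forall>f\<in>J. c f = 0" using rows_indepD[OF J(1) z] by blast
    then show False using nz \<open>c e = 0\<close> by auto
  qed
  have "rv d p e = (\<Sum>f\<in>J. fsc (- c f / c e) (rv d p f))"
  proof (rule ext, clarify)
    fix w i
    show "rv d p e (w, i) = (\<Sum>f\<in>J. fsc (- c f / c e) (rv d p f)) (w, i)"
    proof (cases "i < d")
      case True
      define S where "S = (\<Sum>f\<in>J. c f * rig_entry p f w i)"
      have h0: "c e * rig_entry p e w i + S = 0" using c True sp[of w i] unfolding S_def by simp
      have h1: "(\<Sum>f\<in>J. (- c f / c e) * rig_entry p f w i) = - S / c e"
        unfolding S_def by (simp add: sum_divide_distrib sum_negf)
      have "rig_entry p e w i = - S / c e" using h0 ce by (simp add: field_simps)
      then have "rig_entry p e w i = (\<Sum>f\<in>J. (- c f / c e) * rig_entry p f w i)" using h1 by simp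
      then show ?thesis using True by (subst rv_sum_apply) (simp add: rv_def)
    next
      case False
      then show ?thesis by (subst rv_sum_apply) (simp add: rv_def)
    qed
  qed
  also have "\<dots> \<in> fv.span (rv d p ` J)"
  proof (rule fv.span_sum)
    fix f assume "f \<in> J"
    then have "rv d p f \<in> fv.span (rv d p ` J)" by (intro fv.span_base) simp
    then show "fsc (- c f / c e) (rv d p f) \<in> fv.span (rv d p ` J)" by (rule fv.span_scale)
  qed
  finally show ?thesis .
qed

lemma maximal_card:
  assumes F: "finite F" and J: "J \<subseteq> F" "rows_indep d p J"
    and max: "\<forall>e\<in>F - J. \<not> rows_indep d p (insert e J)"
  shows "card J = row_rank d p F"
proof (rule antisym)
  show "card J \<le> row_rank d p F" using rank_ge[OF F J] .
  obtain I where I: "I \<subseteq> F" "rows_indep d p I" "card I = row_rank d p F" using rank_obtain F by blast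
  have fJ: "finite J" using F J(1) finite_subset by blast
  have fI: "finite I" using F I(1) finite_subset by blast
  have "rv d p ` F \<subseteq> fv.span (rv d p ` J)"
  proof
    fix x assume "x \<in> rv d p ` F"
    then obtain e where e: "e \<in> F" "x = rv d p e" by blast
    show "x \<in> fv.span (rv d p ` J)"
    proof (cases "e \<in> J")
      case True
      then show ?thesis using e by (simp add: fv.span_base)
    next
      case False
      then show ?thesis using maximal_spans[OF J(2) fJ] max e by blast
    qed
  qed
  then have "rv d p ` I \<subseteq> fv.span (rv d p ` J)" using I(1) by blast
  then have "card (rv d p ` I) \<le> card (rv d p ` J)"
    using fv.independent_span_bound[of "rv d p ` J" "rv d p ` I"] indep_to_fv[OF I(2) fI] fJ by simp
  moreover have "card (rv d p ` I) = card I" using indep_to_fv[OF I(2) fI] by (simp add: card_image)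
  moreover have "card (rv d p ` J) \<le> card J" by (rule card_image_le[OF fJ])
  ultimately show "row_rank d p F \<le> card J" using I(3) by simp
qed

lemma extend_maximal:
  assumes F: "finite F" and I: "I \<subseteq> F" "rows_indep d p I"
  obtains J where "I \<subseteq> J" "J \<subseteq> F" "rows_indep d p J" "card J = row_rank d p F"
proof -
  define S where "S = {J. I \<subseteq> J \<and> J \<subseteq> F \<and> rows_indep d p J}"
  have "S \<subseteq> Pow F" unfolding S_def by auto
  moreover have "finite (Pow F)" using F by simp
  ultimately have fS: "finite S" by (rule finite_subset)
  have IS: "I \<in> S" unfolding S_def using I by simp
  define n where "n = Max (card ` S)"
  have "n \<in> card ` S" unfolding n_def using fS IS by (intro Max_in) auto
  then obtain J where J: "J \<in> S" "card J = n" by blast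
  have ge: "\<And>J'. J' \<in> S \<Longrightarrow> card J' \<le> n" unfolding n_def using fS by simp
  have fJ: "finite J" using J(1) F unfolding S_def using finite_subset by blast
  have "\<forall>e\<in>F - J. \<not> rows_indep d p (insert e J)"
  proof (intro ballI notI)
    fix e assume e: "e \<in> F - J" and ind: "rows_indep d p (insert e J)"
    then have "insert e J \<in> S" using J(1) unfolding S_def by auto
    then have "card (insert e J) \<le> n" by (rule ge)
    then show False using e J(2) fJ by simp
  qed
  then have "card J = row_rank d p F" using maximal_card[OF F] J(1) unfolding S_def by blast
  then show ?thesis using that J(1) unfolding S_def by blast
qed

lemma rank_submod:
  assumes X: "finite X" and Y: "finite Y"
  shows "row_rank d p (X \<union> Y) + row_rank d p (X \<inter> Y) \<le> row_rank d p X + row_rank d p Y"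
proof -
  obtain I where I: "I \<subseteq> X \<inter> Y" "rows_indep d p I" "card I = row_rank d p (X \<inter> Y)"
    using rank_obtain X by (metis finite_Int)
  obtain J where J: "I \<subseteq> J" "J \<subseteq> X \<union> Y" "rows_indep d p J" "card J = row_rank d p (X \<union> Y)"
    using extend_maximal[of "X \<union> Y" I d p] X Y I by blast
  have fJ: "finite J" using J X Y by (meson finite_UnI finite_subset)
  have a: "card (J \<inter> X) \<le> row_rank d p X"
    by (rule rank_ge[OF X]) (auto intro: rows_indep_subset[OF J(3) _ fJ])
  have b: "card (J \<inter> Y) \<le> row_rank d p Y"
    by (rule rank_ge[OF Y]) (auto intro: rows_indep_subset[OF J(3) _ fJ])
  have c: "J \<inter> (X \<inter> Y) = I"
  proof -
    have "card (J \<inter> (X \<inter> Y)) \<le> card I"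
      using I(3) rank_ge[of "X \<inter> Y" "J \<inter> (X \<inter> Y)" d p] X rows_indep_subset[OF J(3) _ fJ] by auto
    moreover have "I \<subseteq> J \<inter> (X \<inter> Y)" using I J by auto
    ultimately show ?thesis using fJ by (metis card_seteq finite_Int)
  qed
  have e: "card (J \<inter> X) + card (J \<inter> Y) = card J + card (J \<inter> (X \<inter> Y))"
  proof -
    have "card (J \<inter> X) + card (J \<inter> Y) = card ((J \<inter> X) \<union> (J \<inter> Y)) + card ((J \<inter> X) \<inter> (J \<inter> Y))"
      using fJ by (intro card_Un_Int) auto
    moreover have "(J \<inter> X) \<union> (J \<inter> Y) = J" using J(2) by auto
    moreover have "(J \<inter> X) \<inter> (J \<inter> Y) = J \<inter> (X \<inter> Y)" by auto
    ultimately show ?thesis by simp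
  qed
  have "card J + card I \<le> row_rank d p X + row_rank d p Y" using a b c e by simp
  then show ?thesis using I(3) J(4) by simp
qed

lemma rig_entry_edge:
  assumes "z \<noteq> u"
  shows "rig_entry p {z, u} z i = p z i - p u i"
proof -
  have "(THE u'. u' \<in> {z, u} \<and> u' \<noteq> z) = u" using assms by (intro the_equality) auto
  then show ?thesis unfolding rig_entry_def by simp
qed

lemma rig_entry_notin: "w \<notin> e \<Longrightarrow> rig_entry p e w i = 0"
  unfolding rig_entry_def by simp

lemma AI_set:
  assumes V: "finite V" and z: "z \<in> V" and S: "S \<subseteq> V" "z \<notin> S" "card S \<le> d" "finite S"
    and h: "\<forall>j<d. (\<Sum>u\<in>S. a u * (gp V d z j - gp V d u j)) = 0"
    and u: "u \<in> S"
  shows "a u = 0"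
proof -
  obtain xs where xs: "set xs = S" "distinct xs" using finite_distinct_list[OF S(4)] by blast
  define m where "m = length xs"
  have m: "card S = m" using xs unfolding m_def by (metis distinct_card)
  define us where "us = z # xs"
  have us: "distinct us" "set us \<subseteq> V" "length us = Suc m"
    unfolding us_def m_def using xs S z by auto
  have inj: "inj_on ((!) xs) {..<m}" using xs(2) unfolding m_def by (simp add: inj_on_nth)
  have img: "(!) xs ` {..<m} = S" using xs unfolding m_def by (auto simp: set_conv_nth)
  define l where "l i = - a (xs ! i)" for i
  have "\<forall>j<d. (\<Sum>i<m. l i * (gp V d (us ! Suc i) j - gp V d (us ! 0) j)) = 0"
  proof (intro allI impI)
    fix j assume j: "j < d"
    have "(\<Sum>i<m. l i * (gp V d (us ! Suc i) j - gp V d (us ! 0) j))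
        = (\<Sum>i<m. a (xs ! i) * (gp V d z j - gp V d (xs ! i) j))"
      unfolding l_def us_def by (intro sum.cong) (auto simp: algebra_simps)
    also have "\<dots> = (\<Sum>u\<in>(!) xs ` {..<m}. a u * (gp V d z j - gp V d u j))"
      by (simp add: sum.reindex[OF inj])
    also have "\<dots> = 0" using h j img by simp
    finally show "(\<Sum>i<m. l i * (gp V d (us ! Suc i) j - gp V d (us ! 0) j)) = 0" .
  qed
  moreover obtain i where i: "i < m" "u = xs ! i" using u img by blast
  moreover have "m \<le> d" using m S(3) by simp
  ultimately have "l i = 0" using AI_indep[OF V us] by blast
  then show ?thesis using i by (simp add: l_def)
qed

lemma add_vertex:
  assumes V: "finite V" and B: "rows_indep d (gp V d) B" "finite B" "\<forall>e\<in>B. z \<notin> e"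
    and z: "z \<in> V" and S: "S \<subseteq> V" "z \<notin> S" "card S \<le> d" "finite S"
  shows "rows_indep d (gp V d) (B \<union> (\<lambda>u. {z, u}) ` S)"
    and "B \<inter> (\<lambda>u. {z, u}) ` S = {}"
    and "card ((\<lambda>u. {z, u}) ` S) = card S"
proof -
  let ?p = "gp V d"
  let ?N = "(\<lambda>u. {z, u}) ` S"
  have inj: "inj_on (\<lambda>u. {z, u}) S"
  proof
    fix u u' assume "u \<in> S" "u' \<in> S" "{z, u} = {z, u'}"
    then show "u = u'" using S(2) by (auto simp: doubleton_eq_iff)
  qed
  show disj: "B \<inter> ?N = {}" using B(3) by auto
  show "card ?N = card S" by (rule card_image[OF inj])
  show "rows_indep d ?p (B \<union> ?N)"
    unfolding rows_indep_def
  proof (intro allI impI ballI)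
    fix c :: "'a set \<Rightarrow> real" and e
    assume h: "\<forall>w i. i < d \<longrightarrow> (\<Sum>e\<in>B \<union> ?N. c e * rig_entry ?p e w i) = 0" and e: "e \<in> B \<union> ?N"
    have fN: "finite ?N" using S(4) by simp
    have split: "(\<Sum>e\<in>B \<union> ?N. c e * rig_entry ?p e w i) = (\<Sum>e\<in>B. c e * rig_entry ?p e w i) + (\<Sum>e\<in>?N. c e * rig_entry ?p e w i)" for w i
      by (rule sum.union_disjoint[OF B(2) fN disj])
    have Nsum: "(\<Sum>e\<in>?N. c e * rig_entry ?p e w i) = (\<Sum>u\<in>S. c {z, u} * rig_entry ?p {z, u} w i)" for w i
      by (simp add: sum.reindex[OF inj])
    have cN: "c {z, u} = 0" if u: "u \<in> S" for u
    proof -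
      have "\<forall>j<d. (\<Sum>u\<in>S. c {z, u} * (?p z j - ?p u j)) = 0"
      proof (intro allI impI)
        fix j assume j: "j < d"
        have "(\<Sum>e\<in>B. c e * rig_entry ?p e z j) = 0"
          using B(3) by (intro sum.neutral) (simp add: rig_entry_notin)
        moreover have "(\<Sum>u\<in>S. c {z, u} * rig_entry ?p {z, u} z j) = (\<Sum>u\<in>S. c {z, u} * (?p z j - ?p u j))"
        proof (rule sum.cong[OF refl])
          fix u assume "u \<in> S"
          then have "z \<noteq> u" using S(2) by auto
          then show "c {z, u} * rig_entry ?p {z, u} z j = c {z, u} * (?p z j - ?p u j)" by (simp add: rig_entry_edge)
        qed
        ultimately show "(\<Sum>u\<in>S. c {z, u} * (?p z j - ?p u j)) = 0"
          using h j split[of z j] Nsum[of z j] by simp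
      qed
      then show ?thesis by (rule AI_set[OF V z S _ u])
    qed
    have Nz: "(\<Sum>e\<in>?N. c e * rig_entry ?p e w i) = 0" for w i
      unfolding Nsum using cN by simp
    have zB: "(\<Sum>e\<in>B. c e * rig_entry ?p e w i) = 0" if "i < d" for w i
      using h that split[of w i] Nz[of w i] by simp
    show "c e = 0"
    proof (cases "e \<in> B")
      case True
      show ?thesis by (rule rows_indepD[OF B(1) zB True])
    next
      case False
      then obtain u where "u \<in> S" "e = {z, u}" using e by blast
      then show ?thesis using cN by simp
    qed
  qed
qed

definition fK :: "nat \<Rightarrow> nat \<Rightarrow> int" where
  "fK d m = (if m \<le> d then int (m choose 2) else int d * int m - int ((d + 1) choose 2))"

lemma choose2_int: "int (n choose 2) * 2 = int n * (int n - 1)"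
proof (induction n)
  case 0
  then show ?case by simp
next
  case (Suc n)
  have "Suc n choose 2 = n + (n choose 2)"
    using binomial_Suc_Suc[of n 1] by (simp add: numeral_2_eq_2)
  then show ?case using Suc by (simp add: algebra_simps)
qed

lemma fK_0: "fK d 0 = 0"
  by (simp add: fK_def)

lemma fK_step: "fK d (Suc m) = fK d m + int (min m d)"
proof -
  have c2: "Suc m choose 2 = m + (m choose 2)"
    using binomial_Suc_Suc[of m 1] by (simp add: numeral_2_eq_2)
  consider "Suc m \<le> d" | "m = d" | "m > d" by linarith
  then show ?thesis
  proof cases
    case 1
    then show ?thesis unfolding fK_def using c2 by simp
  next
    case 2
    have "int (Suc d choose 2) * 2 = int (Suc d) * (int (Suc d) - 1)" by (rule choose2_int)
    moreover have "int (d choose 2) * 2 = int d * (int d - 1)" by (rule choose2_int)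
    ultimately show ?thesis unfolding fK_def using 2 by (simp add: algebra_simps)
  next
    case 3
    then show ?thesis unfolding fK_def by (simp add: algebra_simps)
  qed
qed

lemma fK_le_d1: "m \<le> d + 1 \<Longrightarrow> fK d m = int (m choose 2)"
proof -
  assume "m \<le> d + 1"
  then consider "m \<le> d" | "m = d + 1" by linarith
  then show ?thesis
  proof cases
    case 1
    then show ?thesis by (simp add: fK_def)
  next
    case 2
    have "int (Suc d choose 2) * 2 = int (Suc d) * (int (Suc d) - 1)" by (rule choose2_int)
    then show ?thesis unfolding fK_def using 2 by (simp add: algebra_simps)
  qed
qed

lemma finite_Kedges: "finite W \<Longrightarrow> finite (Kedges W)"
proof -
  assume "finite W"
  moreover have "Kedges W \<subseteq> Pow W" unfolding Kedges_def by auto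
  ultimately show ?thesis by (meson finite_Pow_iff finite_subset)
qed

lemma card_Kedges: "finite W \<Longrightarrow> card (Kedges W) = card W choose 2"
  unfolding Kedges_def by (rule n_subsets)

lemma Kedges_mono: "W \<subseteq> W' \<Longrightarrow> Kedges W \<subseteq> Kedges W'"
  unfolding Kedges_def by auto

lemma Kedges_Int: "Kedges (W \<inter> W') = Kedges W \<inter> Kedges W'"
  unfolding Kedges_def by auto

lemma ext_vertices:
  assumes V: "finite V" and Z: "finite Z" "Z \<subseteq> V" and W: "W \<subseteq> V" "finite W" "W \<inter> Z = {}"
    and B: "rows_indep d (gp V d) B" "finite B" "\<forall>e\<in>B. e \<inter> Z = {}"
  shows "\<exists>N. rows_indep d (gp V d) (B \<union> N) \<and> B \<inter> N = {} \<and> finite N \<and>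
      (\<forall>e\<in>N. e \<in> Kedges (W \<union> Z) \<and> e \<inter> Z \<noteq> {}) \<and>
      int (card N) = fK d (card W + card Z) - fK d (card W)"
  using Z W B
proof (induction Z rule: finite_induct)
  case empty
  then show ?case by (intro exI[of _ "{}"]) simp
next
  case (insert z Z)
  have "\<forall>e\<in>B. e \<inter> Z = {}" using insert.prems by auto
  then obtain N where N: "rows_indep d (gp V d) (B \<union> N)" "B \<inter> N = {}" "finite N"
      "\<forall>e\<in>N. e \<in> Kedges (W \<union> Z) \<and> e \<inter> Z \<noteq> {}"
      "int (card N) = fK d (card W + card Z) - fK d (card W)"
    using insert.IH insert.prems by auto
  have zV: "z \<in> V" using insert.prems by simp
  have zW: "z \<notin> W" using insert.prems by auto
  have fWZ: "finite (W \<union> Z)" using insert W by simp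
  have cWZ: "card (W \<union> Z) = card W + card Z"
    using insert.prems insert.hyps by (intro card_Un_disjoint) auto
  obtain S where S: "S \<subseteq> W \<union> Z" "card S = min (card W + card Z) d"
    using obtain_subset_with_card_n[of "min (card W + card Z) d" "W \<union> Z"] cWZ by auto
  have fS: "finite S" using S(1) fWZ by (rule finite_subset)
  have zS: "z \<notin> S" using S(1) zW insert.hyps by auto
  have SV: "S \<subseteq> V" using S(1) insert.prems by auto
  have BNz: "\<forall>e\<in>B \<union> N. z \<notin> e"
  proof
    fix e assume "e \<in> B \<union> N"
    then show "z \<notin> e"
    proof
      assume "e \<in> B" then show ?thesis using insert.prems by auto
    next
      assume "e \<in> N" then have "e \<subseteq> W \<union> Z" using N(4) unfolding Kedges_def by auto
      then show ?thesis using zW insert.hyps by auto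
    qed
  qed
  have fBN: "finite (B \<union> N)" using insert.prems N(3) by simp
  note av = add_vertex[OF V N(1) fBN BNz zV SV zS _ fS]
  define E where "E = (\<lambda>u. {z, u}) ` S"
  have ind: "rows_indep d (gp V d) (B \<union> (N \<union> E))" using av(1) S(2) unfolding E_def by (simp add: Un_assoc)
  have dis: "(B \<union> N) \<inter> E = {}" using av(2) S(2) unfolding E_def by simp
  have cE: "card E = card S" using av(3) S(2) unfolding E_def by simp
  have NE: "N \<inter> E = {}" using dis by auto
  have BE: "B \<inter> (N \<union> E) = {}" using dis N(2) by auto
  have fE: "finite E" unfolding E_def using fS by simp
  have Eprops: "\<forall>e\<in>E. e \<in> Kedges (W \<union> insert z Z) \<and> e \<inter> insert z Z \<noteq> {}"
  proof
    fix e assume "e \<in> E"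
    then obtain u where u: "u \<in> S" "e = {z, u}" unfolding E_def by blast
    then have "z \<noteq> u" using zS by auto
    then have "card e = 2" using u by simp
    moreover have "e \<subseteq> W \<union> insert z Z" using u S(1) by auto
    ultimately show "e \<in> Kedges (W \<union> insert z Z) \<and> e \<inter> insert z Z \<noteq> {}" unfolding Kedges_def using u by auto
  qed
  have Nprops: "\<forall>e\<in>N. e \<in> Kedges (W \<union> insert z Z) \<and> e \<inter> insert z Z \<noteq> {}"
    using N(4) Kedges_mono[of "W \<union> Z" "W \<union> insert z Z"] by auto
  have "card (N \<union> E) = card N + card E" using N(3) fE NE by (rule card_Un_disjoint)
  moreover have "card W + card (insert z Z) = Suc (card W + card Z)" using insert.hyps by simp
  ultimately have "int (card (N \<union> E)) = fK d (card W + card (insert z Z)) - fK d (card W)"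
    using N(5) cE S(2) fK_step[of d "card W + card Z"] by simp
  then show ?case using ind BE N(3) fE Eprops Nprops
    by (intro exI[of _ "N \<union> E"]) auto
qed

lemma K_lower:
  assumes V: "finite V" and X: "X \<subseteq> V"
  shows "fK d (card X) \<le> int (row_rank d (gp V d) (Kedges X))"
proof -
  have fX: "finite X" using V X by (rule finite_subset[rotated])
  obtain N where N: "rows_indep d (gp V d) ({} \<union> N)" "finite N"
      "\<forall>e\<in>N. e \<in> Kedges ({} \<union> X) \<and> e \<inter> X \<noteq> {}"
      "int (card N) = fK d (card {} + card X) - fK d (card {})"
    using ext_vertices[OF V fX X, where W="{}" and B="{}" and d=d] rows_indep_empty by auto
  have "N \<subseteq> Kedges X" using N(3) by auto
  then have "card N \<le> row_rank d (gp V d) (Kedges X)"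
    using rank_ge[OF finite_Kedges[OF fX]] N(1) by simp
  then show ?thesis using N(4) by (simp add: fK_0)
qed

lemma closure_complete:
  assumes V: "finite V" and d: "d \<ge> 1" and W: "W \<subseteq> V" and F: "F \<subseteq> Kedges W"
    and r: "row_rank d (gp V d) F = row_rank d (gp V d) (Kedges W)"
  shows "rcl V d F = Kedges W"
proof -
  let ?r = "row_rank d (gp V d)"
  have fW: "finite W" using V W by (rule finite_subset[rotated])
  have fKW: "finite (Kedges W)" by (rule finite_Kedges[OF fW])
  have fF: "finite F" using F fKW by (rule finite_subset)
  show ?thesis
  proof
    show "Kedges W \<subseteq> rcl V d F"
    proof
      fix e assume e: "e \<in> Kedges W"
      have "?r F \<le> ?r (F \<union> {e})" using fF by (intro rank_mono) auto
      moreover have "?r (F \<union> {e}) \<le> ?r (Kedges W)" using e F fKW by (intro rank_mono) auto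
      moreover have "e \<in> Kedges V" using e Kedges_mono[OF W] by auto
      ultimately show "e \<in> rcl V d F" unfolding rcl_def rd_gp using r by simp
    qed
  next
    show "rcl V d F \<subseteq> Kedges W"
    proof
      fix e assume e: "e \<in> rcl V d F"
      then have eV: "e \<in> Kedges V" and eq: "?r (F \<union> {e}) = ?r F" unfolding rcl_def rd_gp by auto
      show "e \<in> Kedges W"
      proof (rule ccontr)
        assume nW: "e \<notin> Kedges W"
        have "\<exists>a b. e = {a, b} \<and> a \<noteq> b" using eV unfolding Kedges_def by (simp add: card_2_iff)
        then obtain a b where ab: "e = {a, b}" "a \<noteq> b" by blast
        have abV: "a \<in> V" "b \<in> V" using eV ab unfolding Kedges_def by auto
        have nab: "\<not> (a \<in> W \<and> b \<in> W)" using nW ab eV unfolding Kedges_def by auto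
        obtain z u where zu: "e = {z, u}" "z \<noteq> u" "z \<notin> W" "z \<in> V" "u \<in> V"
        proof (cases "a \<in> W")
          case True
          then have "b \<notin> W" using nab by simp
          moreover have "e = {b, a}" using ab by (simp add: insert_commute)
          ultimately show ?thesis using that[of b a] ab abV by simp
        next
          case False
          then show ?thesis using that[of a b] ab abV by simp
        qed
        obtain I where I: "I \<subseteq> F" "rows_indep d (gp V d) I" "card I = ?r F" using rank_obtain[OF fF] .
        have fI: "finite I" using I(1) fF by (rule finite_subset)
        have Iz: "\<forall>e\<in>I. z \<notin> e" using I(1) F zu(3) unfolding Kedges_def by auto
        have "rows_indep d (gp V d) (I \<union> (\<lambda>x. {z, x}) ` {u})"
          by (rule add_vertex(1)[OF V I(2) fI Iz zu(4)]) (use zu d in auto)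
        moreover have "I \<inter> (\<lambda>x. {z, x}) ` {u} = {}"
          by (rule add_vertex(2)[OF V I(2) fI Iz zu(4)]) (use zu d in auto)
        ultimately have "rows_indep d (gp V d) (I \<union> {e})" "I \<inter> {e} = {}" using zu(1) by simp_all
        then have "card (I \<union> {e}) \<le> ?r (F \<union> {e})"
          using I(1) fF by (intro rank_ge) auto
        moreover have "card (I \<union> {e}) = card I + 1" using \<open>I \<inter> {e} = {}\<close> fI by simp
        ultimately show False using eq I(3) by simp
      qed
    qed
  qed
qed

lemma sum_two_delta:
  assumes "finite K" "k1 \<in> K" "k2 \<in> K" "k1 \<noteq> k2"
  shows "(\<Sum>k\<in>K. (if k = k1 then 1 else if k = k2 then -1 else (0::real)) * h k) = h k1 - h k2"
proof -
  have "(\<Sum>k\<in>K. (if k = k1 then 1 else if k = k2 then -1 else (0::real)) * h k) =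
      (\<Sum>k\<in>K. (if k = k1 then h k1 else 0) + (if k = k2 then - h k2 else 0))"
    by (rule sum.cong) (use assms in auto)
  also have "\<dots> = h k1 - h k2" using assms by (simp add: sum.distrib)
  finally show ?thesis .
qed

definition dl :: "'b \<Rightarrow> 'b \<Rightarrow> real" where
  "dl q = (\<lambda>x. if x = q then 1 else 0)"

lemma family_indep_card:
  fixes g :: "'k \<Rightarrow> 'b \<Rightarrow> real"
  assumes K: "finite K" and Q: "finite Q"
    and ind: "\<And>l. (\<Sum>k\<in>K. fsc (l k) (g k)) = 0 \<Longrightarrow> \<forall>k\<in>K. l k = 0"
    and supp: "\<And>k q. k \<in> K \<Longrightarrow> q \<notin> Q \<Longrightarrow> g k q = 0"
  shows "card K \<le> card Q"
proof -
  have inj: "inj_on g K"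
  proof
    fix k1 k2 assume k: "k1 \<in> K" "k2 \<in> K" "g k1 = g k2"
    show "k1 = k2"
    proof (rule ccontr)
      assume ne: "k1 \<noteq> k2"
      define l where "l k = (if k = k1 then 1 else if k = k2 then -1 else (0::real))" for k
      have "(\<Sum>k\<in>K. fsc (l k) (g k)) = 0"
      proof (rule ext)
        fix x
        have "(\<Sum>k\<in>K. fsc (l k) (g k)) x = (\<Sum>k\<in>K. l k * g k x)" by (simp add: sum_fun_apply)
        also have "\<dots> = g k1 x - g k2 x" unfolding l_def by (rule sum_two_delta[OF K k(1,2) ne])
        finally show "(\<Sum>k\<in>K. fsc (l k) (g k)) x = 0 x" using k(3) by simp
      qed
      then have "l k1 = 0" using ind k(1) by blast
      then show False by (simp add: l_def)
    qed
  qed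
  have indep: "fv.independent (g ` K)"
    unfolding fv.dependent_finite[OF finite_imageI[OF K]]
  proof (intro notI, elim exE conjE bexE)
    fix u v assume s: "(\<Sum>v\<in>g ` K. fsc (u v) v) = 0" and v: "v \<in> g ` K" and uv: "u v \<noteq> 0"
    have "(\<Sum>k\<in>K. fsc (u (g k)) (g k)) = 0" using s by (simp add: sum.reindex[OF inj])
    then have "\<forall>k\<in>K. u (g k) = 0" by (rule ind)
    then show False using v uv by auto
  qed
  have sp: "g ` K \<subseteq> fv.span (dl ` Q)"
  proof
    fix y assume "y \<in> g ` K"
    then obtain k where k: "k \<in> K" "y = g k" by blast
    have "g k = (\<Sum>q\<in>Q. fsc (g k q) (dl q))"
    proof (rule ext)
      fix x
      have "(\<Sum>q\<in>Q. fsc (g k q) (dl q)) x = (\<Sum>q\<in>Q. if q = x then g k x else 0)"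
        unfolding sum_fun_apply by (rule sum.cong) (auto simp: dl_def)
      also have "\<dots> = g k x" using Q supp[OF k(1), of x] by (simp add: sum.delta)
      finally show "g k x = (\<Sum>q\<in>Q. fsc (g k q) (dl q)) x" by simp
    qed
    also have "\<dots> \<in> fv.span (dl ` Q)"
    proof (rule fv.span_sum)
      fix q assume "q \<in> Q"
      then have "dl q \<in> fv.span (dl ` Q)" by (intro fv.span_base) simp
      then show "fsc (g k q) (dl q) \<in> fv.span (dl ` Q)" by (rule fv.span_scale)
    qed
    finally show "y \<in> fv.span (dl ` Q)" using k by simp
  qed
  have "card (g ` K) \<le> card (dl ` Q)"
    using fv.independent_span_bound[OF finite_imageI[OF Q] indep sp] by simp
  also have "\<dots> \<le> card Q" by (rule card_image_le[OF Q])
  finally show ?thesis using card_image[OF inj] by simp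
qed


definition ipr :: "'b set \<Rightarrow> ('b \<Rightarrow> real) \<Rightarrow> ('b \<Rightarrow> real) \<Rightarrow> real" where
  "ipr Q f g = (\<Sum>q\<in>Q. f q * g q)"

lemma ipr_sum_right:
  "ipr Q f (\<Sum>j\<in>J. fsc (c j) (h j)) = (\<Sum>j\<in>J. c j * ipr Q f (h j))"
proof -
  have "ipr Q f (\<Sum>j\<in>J. fsc (c j) (h j)) = (\<Sum>q\<in>Q. \<Sum>j\<in>J. f q * (c j * h j q))"
    unfolding ipr_def sum_fun_apply by (simp add: sum_distrib_left)
  also have "\<dots> = (\<Sum>j\<in>J. \<Sum>q\<in>Q. c j * (f q * h j q))"
    by (subst sum.swap) (simp add: mult_ac)
  also have "\<dots> = (\<Sum>j\<in>J. c j * ipr Q f (h j))"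
    unfolding ipr_def by (simp add: sum_distrib_left)
  finally show ?thesis .
qed

lemma ipr_sum_left:
  "ipr Q (\<Sum>j\<in>J. fsc (c j) (h j)) f = (\<Sum>j\<in>J. c j * ipr Q (h j) f)"
proof -
  have "ipr Q (\<Sum>j\<in>J. fsc (c j) (h j)) f = ipr Q f (\<Sum>j\<in>J. fsc (c j) (h j))"
    unfolding ipr_def by (simp add: mult_ac)
  also have "\<dots> = (\<Sum>j\<in>J. c j * ipr Q f (h j))" by (rule ipr_sum_right)
  also have "\<dots> = (\<Sum>j\<in>J. c j * ipr Q (h j) f)" unfolding ipr_def by (simp add: mult_ac)
  finally show ?thesis .
qed

lemma ipr_self_zero:
  assumes "finite Q" "ipr Q x x = 0" "q \<in> Q"
  shows "x q = 0"
proof -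
  have "\<forall>q\<in>Q. x q * x q = 0"
    using assms(1,2) unfolding ipr_def by (subst sum_nonneg_eq_0_iff[symmetric]) auto
  then show ?thesis using assms(3) by simp
qed

lemma ipr_edge:
  assumes X: "finite X" and uv: "u \<in> X" "v \<in> X" "u \<noteq> v"
  shows "ipr (X \<times> {..<d}) (rv d p {u, v}) z = (\<Sum>i<d. (p u i - p v i) * (z (u, i) - z (v, i)))"
proof -
  let ?f = "\<lambda>q. rv d p {u, v} q * z q"
  have "ipr (X \<times> {..<d}) (rv d p {u, v}) z = (\<Sum>q\<in>{u, v} \<times> {..<d}. ?f q)"
    unfolding ipr_def
  proof (rule sum.mono_neutral_right)
    show "finite (X \<times> {..<d})" using X by simp
    show "{u, v} \<times> {..<d} \<subseteq> X \<times> {..<d}" using uv by auto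
    show "\<forall>q\<in>X \<times> {..<d} - {u, v} \<times> {..<d}. ?f q = 0"
    proof
      fix q assume q: "q \<in> X \<times> {..<d} - {u, v} \<times> {..<d}"
      obtain w i where wi: "q = (w, i)" by (cases q)
      have "w \<notin> {u, v}" using q wi by auto
      then show "?f q = 0" using wi by (simp add: rv_def rig_entry_notin)
    qed
  qed
  also have "\<dots> = (\<Sum>w\<in>{u, v}. \<Sum>i<d. ?f (w, i))"
    by (simp add: sum.cartesian_product)
  also have "\<dots> = (\<Sum>i<d. ?f (u, i)) + (\<Sum>i<d. ?f (v, i))" using uv by simp
  also have "\<dots> = (\<Sum>i<d. (p u i - p v i) * z (u, i) + (p v i - p u i) * z (v, i))"
  proof -
    have eu: "rig_entry p {u, v} u i = p u i - p v i" for i using rig_entry_edge[OF uv(3)] .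
    have ev: "rig_entry p {u, v} v i = p v i - p u i" for i
      using rig_entry_edge[of v u p i] uv(3) by (simp add: insert_commute)
    show ?thesis by (simp add: rv_def eu ev sum.distrib)
  qed
  also have "\<dots> = (\<Sum>i<d. (p u i - p v i) * (z (u, i) - z (v, i)))"
    by (rule sum.cong) (auto simp: algebra_simps)
  finally show ?thesis .
qed

definition trv :: "'a set \<Rightarrow> nat \<Rightarrow> nat \<Rightarrow> ('a \<times> nat \<Rightarrow> real)" where
  "trv X d a = (\<lambda>(w, i). if w \<in> X \<and> i < d \<and> i = a then 1 else 0)"

definition rov :: "'a set \<Rightarrow> nat \<Rightarrow> ('a \<Rightarrow> nat \<Rightarrow> real) \<Rightarrow> nat \<times> nat \<Rightarrow> ('a \<times> nat \<Rightarrow> real)" where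
  "rov X d p t = (\<lambda>(w, i). if w \<in> X \<and> i < d then
      (if i = fst t then p w (snd t) else 0) - (if i = snd t then p w (fst t) else 0) else 0)"

definition Opairs :: "nat \<Rightarrow> (nat \<times> nat) set" where
  "Opairs d = Sigma {..<d} (\<lambda>a. {a<..<d})"

lemma orth_trv:
  assumes X: "finite X" and e: "e \<in> Kedges X"
  shows "ipr (X \<times> {..<d}) (rv d p e) (trv X d a) = 0"
proof -
  obtain u v where uv: "e = {u, v}" "u \<noteq> v" using e unfolding Kedges_def by (auto simp: card_2_iff)
  have "u \<in> X" "v \<in> X" using e uv unfolding Kedges_def by auto
  then show ?thesis using ipr_edge[OF X _ _ uv(2)] uv(1) by (simp add: trv_def)
qed

lemma orth_rov:
  assumes X: "finite X" and e: "e \<in> Kedges X" and t: "t \<in> Opairs d"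
  shows "ipr (X \<times> {..<d}) (rv d p e) (rov X d p t) = 0"
proof -
  obtain u v where uv: "e = {u, v}" "u \<noteq> v" using e unfolding Kedges_def by (auto simp: card_2_iff)
  have uvX: "u \<in> X" "v \<in> X" using e uv unfolding Kedges_def by auto
  obtain a b where ab: "t = (a, b)" "a < d" "b < d" using t unfolding Opairs_def by auto
  have "ipr (X \<times> {..<d}) (rv d p e) (rov X d p t) =
     (\<Sum>i<d. (p u i - p v i) * ((if i = a then p u b - p v b else 0) - (if i = b then p u a - p v a else 0)))"
    unfolding uv(1) ipr_edge[OF X uvX uv(2)]
    by (rule sum.cong) (auto simp: rov_def ab uvX)
  also have "\<dots> = (\<Sum>i<d. (if i = a then (p u a - p v a) * (p u b - p v b) else 0)) -
                    (\<Sum>i<d. (if i = b then (p u b - p v b) * (p u a - p v a) else 0))"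
    by (subst sum_subtractf[symmetric]) (rule sum.cong, auto simp: right_diff_distrib)
  also have "\<dots> = (p u a - p v a) * (p u b - p v b) - (p u b - p v b) * (p u a - p v a)"
    using ab by (simp add: sum.delta)
  also have "\<dots> = 0" by simp
  finally show ?thesis .
qed

lemma card_Opairs: "card (Opairs d) = d choose 2"
proof -
  have "bij_betw (\<lambda>(a, b). {a, b}) (Opairs d) {B. B \<subseteq> {..<d} \<and> card B = 2}"
    unfolding bij_betw_def
  proof (intro conjI)
    show "inj_on (\<lambda>(a, b). {a, b}) (Opairs d)"
    proof (rule inj_onI, clarify)
      fix a b a' b' assume "(a, b) \<in> Opairs d" "(a', b') \<in> Opairs d" "{a, b} = {a', b'}"
      then show "a = a' \<and> b = b'" unfolding Opairs_def by (auto simp: doubleton_eq_iff)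
    qed
    show "(\<lambda>(a, b). {a, b}) ` Opairs d = {B. B \<subseteq> {..<d} \<and> card B = 2}"
    proof
      show "(\<lambda>(a, b). {a, b}) ` Opairs d \<subseteq> {B. B \<subseteq> {..<d} \<and> card B = 2}"
        unfolding Opairs_def by auto
      show "{B. B \<subseteq> {..<d} \<and> card B = 2} \<subseteq> (\<lambda>(a, b). {a, b}) ` Opairs d"
      proof
        fix B assume "B \<in> {B. B \<subseteq> {..<d} \<and> card B = 2}"
        then have B: "B \<subseteq> {..<d}" "card B = 2" by auto
        then obtain x y where xy: "B = {x, y}" "x \<noteq> y" by (auto simp: card_2_iff)
        show "B \<in> (\<lambda>(a, b). {a, b}) ` Opairs d"
        proof (cases "x < y")
          case True
          then have "(x, y) \<in> Opairs d" using B xy unfolding Opairs_def by auto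
          then show ?thesis using xy by force
        next
          case False
          then have "y < x" using xy by simp
          then have "(y, x) \<in> Opairs d" using B xy unfolding Opairs_def by auto
          moreover have "B = {y, x}" using xy by auto
          ultimately show ?thesis by force
        qed
      qed
    qed
  qed
  then have "card (Opairs d) = card {B. B \<subseteq> {..<d} \<and> card B = 2}" by (rule bij_betw_same_card)
  also have "\<dots> = d choose 2" using n_subsets[of "{..<d}" 2] by simp
  finally show ?thesis .
qed


definition Smat :: "(nat \<times> nat \<Rightarrow> real) \<Rightarrow> nat \<Rightarrow> nat \<Rightarrow> real" where
  "Smat \<sigma> i j = (if i < j then \<sigma> (i, j) else if j < i then - \<sigma> (j, i) else 0)"

lemma rot_expand:
  assumes i: "i < d"
  shows "(\<Sum>t\<in>Opairs d. \<sigma> t * ((if i = fst t then q (snd t) else 0) - (if i = snd t then q (fst t) else 0)))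
     = (\<Sum>j<d. Smat \<sigma> i j * q j)"
proof -
  have "(\<Sum>t\<in>Opairs d. \<sigma> t * ((if i = fst t then q (snd t) else 0) - (if i = snd t then q (fst t) else 0)))
      = (\<Sum>a<d. \<Sum>b\<in>{a<..<d}. \<sigma> (a, b) * ((if i = a then q b else 0) - (if i = b then q a else 0)))"
    unfolding Opairs_def by (simp add: sum.Sigma split_def)
  also have "\<dots> = (\<Sum>a<d. \<Sum>b\<in>{a<..<d}. (if i = a then \<sigma> (a, b) * q b else 0))
      - (\<Sum>a<d. \<Sum>b\<in>{a<..<d}. (if i = b then \<sigma> (a, b) * q a else 0))"
    by (simp only: sum_subtractf[symmetric]) (intro sum.cong refl, auto simp: algebra_simps)
  also have "(\<Sum>a<d. \<Sum>b\<in>{a<..<d}. (if i = a then \<sigma> (a, b) * q b else 0))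
      = (\<Sum>a<d. if i = a then (\<Sum>b\<in>{a<..<d}. \<sigma> (a, b) * q b) else 0)"
    by (rule sum.cong) auto
  also have "\<dots> = (\<Sum>b\<in>{i<..<d}. \<sigma> (i, b) * q b)" using i by (simp add: sum.delta')
  also have "(\<Sum>a<d. \<Sum>b\<in>{a<..<d}. (if i = b then \<sigma> (a, b) * q a else 0))
      = (\<Sum>a<d. if a < i then \<sigma> (a, i) * q a else 0)"
  proof (rule sum.cong[OF refl])
    fix a assume "a \<in> {..<d}"
    have "(\<Sum>b\<in>{a<..<d}. (if i = b then \<sigma> (a, b) * q a else 0)) = (if i \<in> {a<..<d} then \<sigma> (a, i) * q a else 0)"
      by (simp add: sum.delta')
    then show "(\<Sum>b\<in>{a<..<d}. (if i = b then \<sigma> (a, b) * q a else 0)) = (if a < i then \<sigma> (a, i) * q a else 0)"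
      using i by auto
  qed
  also have "\<dots> = (\<Sum>a\<in>{..<i}. \<sigma> (a, i) * q a)"
  proof -
    have "(\<Sum>a<d. if a < i then \<sigma> (a, i) * q a else 0) = (\<Sum>a\<in>{a\<in>{..<d}. a < i}. \<sigma> (a, i) * q a)"
      by (rule sum.inter_filter[symmetric]) simp
    moreover have "{a\<in>{..<d}. a < i} = {..<i}" using i by auto
    ultimately show ?thesis by simp
  qed
  finally have L: "(\<Sum>t\<in>Opairs d. \<sigma> t * ((if i = fst t then q (snd t) else 0) - (if i = snd t then q (fst t) else 0)))
      = (\<Sum>b\<in>{i<..<d}. \<sigma> (i, b) * q b) - (\<Sum>a\<in>{..<i}. \<sigma> (a, i) * q a)" .
  have "(\<Sum>j<d. Smat \<sigma> i j * q j) = (\<Sum>j<d. (if i < j then \<sigma> (i, j) * q j else 0) + (if j < i then - (\<sigma> (j, i) * q j) else 0))"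
    by (rule sum.cong) (auto simp: Smat_def)
  also have "\<dots> = (\<Sum>j<d. if i < j then \<sigma> (i, j) * q j else 0) + (\<Sum>j<d. if j < i then - (\<sigma> (j, i) * q j) else 0)"
    by (rule sum.distrib)
  also have "(\<Sum>j<d. if i < j then \<sigma> (i, j) * q j else 0) = (\<Sum>j\<in>{j\<in>{..<d}. i < j}. \<sigma> (i, j) * q j)"
    by (rule sum.inter_filter[symmetric]) simp
  also have "{j\<in>{..<d}. i < j} = {i<..<d}" by auto
  also have "(\<Sum>j<d. if j < i then - (\<sigma> (j, i) * q j) else 0) = (\<Sum>j\<in>{j\<in>{..<d}. j < i}. - (\<sigma> (j, i) * q j))"
    by (rule sum.inter_filter[symmetric]) simp
  also have "{j\<in>{..<d}. j < i} = {..<i}" using i by auto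
  finally show ?thesis using L by (simp add: sum_negf)
qed


lemma ipr_add_right: "ipr Q f (a + b) = ipr Q f a + ipr Q f b"
  unfolding ipr_def by (simp add: sum.distrib algebra_simps)

lemma ipr_neg_right: "ipr Q f (- a) = - ipr Q f a"
  unfolding ipr_def by (simp add: sum_negf)

lemma K_upper:
  fixes V :: "'a set"
  assumes V: "finite V" and X: "X \<subseteq> V" and cX: "d + 1 \<le> card X"
  shows "int (row_rank d (gp V d) (Kedges X)) + int ((d + 1) choose 2) \<le> int d * int (card X)"
proof -
  let ?p = "gp V d"
  have fX: "finite X" using V X by (rule finite_subset[rotated])
  obtain I where I: "I \<subseteq> Kedges X" "rows_indep d ?p I" "card I = row_rank d ?p (Kedges X)"
    using rank_obtain[OF finite_Kedges[OF fX]] .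
  have fI: "finite I" using I(1) finite_Kedges[OF fX] by (rule finite_subset)
  define Q where "Q = X \<times> {..<d}"
  have fQ: "finite Q" unfolding Q_def using fX by simp
  define g :: "'a set + (nat + nat \<times> nat) \<Rightarrow> ('a \<times> nat \<Rightarrow> real)" where
    "g k = (case k of Inl e \<Rightarrow> rv d ?p e | Inr (Inl a) \<Rightarrow> trv X d a | Inr (Inr t) \<Rightarrow> rov X d ?p t)" for k
  define K1 :: "('a set + (nat + nat \<times> nat)) set" where "K1 = Inl ` I"
  define K2 :: "('a set + (nat + nat \<times> nat)) set" where "K2 = Inr ` Inl ` {..<d}"
  define K3 :: "('a set + (nat + nat \<times> nat)) set" where "K3 = Inr ` Inr ` Opairs d"
  have fO: "finite (Opairs d)" unfolding Opairs_def by simp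
  have fK1: "finite K1" "finite K2" "finite K3" unfolding K1_def K2_def K3_def using fI fO by auto
  have d12: "K1 \<inter> K2 = {}" "(K1 \<union> K2) \<inter> K3 = {}" unfolding K1_def K2_def K3_def by auto
  have inj1: "inj_on (Inl :: 'a set \<Rightarrow> 'a set + (nat + nat \<times> nat)) I" by (simp add: inj_on_def)
  have inj2: "inj_on (\<lambda>a. Inr (Inl a) :: 'a set + (nat + nat \<times> nat)) {..<d}" by (simp add: inj_on_def)
  have inj3: "inj_on (\<lambda>t. Inr (Inr t) :: 'a set + (nat + nat \<times> nat)) (Opairs d)" by (simp add: inj_on_def)
  have K2': "K2 = (\<lambda>a. Inr (Inl a)) ` {..<d}" unfolding K2_def by auto
  have K3': "K3 = (\<lambda>t. Inr (Inr t)) ` Opairs d" unfolding K3_def by auto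
  have cK: "card (K1 \<union> K2 \<union> K3) = card I + d + card (Opairs d)"
  proof -
    have "card (K1 \<union> K2 \<union> K3) = card K1 + card K2 + card K3"
      using fK1 d12 by (simp add: card_Un_disjoint)
    moreover have "card K1 = card I" unfolding K1_def by (rule card_image[OF inj1])
    moreover have "card K2 = d" unfolding K2' using card_image[OF inj2] by simp
    moreover have "card K3 = card (Opairs d)" unfolding K3' by (rule card_image[OF inj3])
    ultimately show ?thesis by simp
  qed
  have supp: "g k q = 0" if k: "k \<in> K1 \<union> K2 \<union> K3" and q: "q \<notin> Q" for k q
  proof -
    obtain w i where wi: "q = (w, i)" by (cases q)
    have "w \<notin> X \<or> \<not> i < d" using q wi unfolding Q_def by auto
    then show ?thesis
    proof
      assume w: "w \<notin> X"
      show ?thesis using k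
      proof (elim UnE)
        assume "k \<in> K1"
        then obtain e where e: "k = Inl e" "e \<in> I" unfolding K1_def by blast
        then have "w \<notin> e" using w I(1) unfolding Kedges_def by auto
        then show ?thesis using e wi by (simp add: g_def rv_def rig_entry_notin)
      next
        assume "k \<in> K2"
        then show ?thesis using w wi unfolding K2_def by (auto simp: g_def trv_def)
      next
        assume "k \<in> K3"
        then show ?thesis using w wi unfolding K3_def by (auto simp: g_def rov_def)
      qed
    next
      assume i: "\<not> i < d"
      show ?thesis using k
      proof (elim UnE)
        assume "k \<in> K1"
        then show ?thesis using i wi unfolding K1_def by (auto simp: g_def rv_def)
      next
        assume "k \<in> K2"
        then show ?thesis using i wi unfolding K2_def by (auto simp: g_def trv_def)
      next
        assume "k \<in> K3"
        then show ?thesis using i wi unfolding K3_def by (auto simp: g_def rov_def)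
      qed
    qed
  qed
  obtain Y where Y: "Y \<subseteq> X" "card Y = d + 1" using obtain_subset_with_card_n[OF cX] by blast
  obtain us where us0: "set us = Y" "distinct us" using finite_distinct_list[of Y] Y(1) fX finite_subset by blast
  have us: "distinct us" "set us \<subseteq> V" "length us = Suc d"
    using us0 Y X by (auto simp: distinct_card[symmetric])
  have usX: "us ! k \<in> X" if "k \<le> d" for k using that us0 Y us(3) by (metis le_imp_less_Suc nth_mem subsetD)
  have ind: "\<forall>k\<in>K1 \<union> K2 \<union> K3. l k = 0" if s: "(\<Sum>k\<in>K1 \<union> K2 \<union> K3. fsc (l k) (g k)) = 0" for l
  proof -
    define x where "x = (\<Sum>e\<in>I. fsc (l (Inl e)) (rv d ?p e))"
    define \<tau> where "\<tau> a = l (Inr (Inl a))" for a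
    define \<sigma> where "\<sigma> t = l (Inr (Inr t))" for t
    define y2 where "y2 = (\<Sum>a<d. fsc (\<tau> a) (trv X d a))"
    define y3 where "y3 = (\<Sum>t\<in>Opairs d. fsc (\<sigma> t) (rov X d ?p t))"
    have "(\<Sum>k\<in>K1 \<union> K2 \<union> K3. fsc (l k) (g k)) = (\<Sum>k\<in>K1. fsc (l k) (g k)) + (\<Sum>k\<in>K2. fsc (l k) (g k)) + (\<Sum>k\<in>K3. fsc (l k) (g k))"
      using fK1 d12 by (simp add: sum.union_disjoint)
    moreover have "(\<Sum>k\<in>K1. fsc (l k) (g k)) = x" unfolding K1_def x_def by (simp add: sum.reindex[OF inj1] g_def)
    moreover have "(\<Sum>k\<in>K2. fsc (l k) (g k)) = y2" unfolding K2' y2_def by (simp add: sum.reindex[OF inj2] g_def \<tau>_def)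
    moreover have "(\<Sum>k\<in>K3. fsc (l k) (g k)) = y3" unfolding K3' y3_def by (simp add: sum.reindex[OF inj3] g_def \<sigma>_def)
    ultimately have xy: "x + (y2 + y3) = 0" using s by (simp add: add.assoc)
    have orth: "ipr Q (rv d ?p e) (y2 + y3) = 0" if e: "e \<in> I" for e
    proof -
      have eK: "e \<in> Kedges X" using e I(1) by auto
      have "ipr Q (rv d ?p e) y2 = 0" unfolding y2_def ipr_sum_right Q_def using orth_trv[OF fX eK] by simp
      moreover have "ipr Q (rv d ?p e) y3 = 0" unfolding y3_def ipr_sum_right Q_def using orth_rov[OF fX eK] by simp
      ultimately show ?thesis by (simp add: ipr_add_right)
    qed
    have "ipr Q x (y2 + y3) = 0" unfolding x_def ipr_sum_left using orth by simp
    moreover have "y2 + y3 = - x" using xy by (simp add: eq_neg_iff_add_eq_0 add.commute)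
    ultimately have "ipr Q x x = 0" by (simp add: ipr_neg_right)
    then have xQ: "x q = 0" if "q \<in> Q" for q using ipr_self_zero[OF fQ] that by blast
    have x0: "x (w, i) = 0" if "i < d" for w i
    proof (cases "w \<in> X")
      case True
      then show ?thesis using xQ[of "(w, i)"] that unfolding Q_def by simp
    next
      case False
      have "x (w, i) = (\<Sum>e\<in>I. l (Inl e) * rv d ?p e (w, i))" unfolding x_def sum_fun_apply by simp
      also have "\<dots> = 0"
      proof (rule sum.neutral, intro ballI)
        fix e assume "e \<in> I"
        then have "w \<notin> e" using False I(1) unfolding Kedges_def by auto
        then show "l (Inl e) * rv d ?p e (w, i) = 0" by (simp add: rv_def rig_entry_notin)
      qed
      finally show ?thesis .
    qed
    have l1: "l (Inl e) = 0" if e: "e \<in> I" for e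
    proof (rule rows_indepD[OF I(2) _ e])
      fix w i assume i: "i < d"
      have "x (w, i) = (\<Sum>e\<in>I. l (Inl e) * rig_entry ?p e w i)"
        unfolding x_def rv_sum_apply using i by simp
      then show "(\<Sum>e\<in>I. l (Inl e) * rig_entry ?p e w i) = 0" using x0[OF i] by simp
    qed
    have x00: "x = 0" unfolding x_def using l1 by simp
    then have y0: "y2 + y3 = 0" using xy by simp
    have yexp: "(y2 + y3) (w, i) = \<tau> i + (\<Sum>j<d. Smat \<sigma> i j * ?p w j)" if w: "w \<in> X" and i: "i < d" for w i
    proof -
      have "y2 (w, i) = (\<Sum>a<d. \<tau> a * (if i = a then 1 else 0))"
        unfolding y2_def sum_fun_apply by (rule sum.cong) (auto simp: trv_def w i)
      also have "\<dots> = (\<Sum>a<d. if a = i then \<tau> a else 0)" by (rule sum.cong) auto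
      also have "\<dots> = \<tau> i" using i by simp
      finally have a: "y2 (w, i) = \<tau> i" .
      have "y3 (w, i) = (\<Sum>t\<in>Opairs d. \<sigma> t * ((if i = fst t then ?p w (snd t) else 0) - (if i = snd t then ?p w (fst t) else 0)))"
        unfolding y3_def sum_fun_apply by (rule sum.cong) (auto simp: rov_def w i)
      also have "\<dots> = (\<Sum>j<d. Smat \<sigma> i j * ?p w j)" by (rule rot_expand[OF i])
      finally have b: "y3 (w, i) = (\<Sum>j<d. Smat \<sigma> i j * ?p w j)" .
      show ?thesis using a b by simp
    qed
    have S0: "Smat \<sigma> i j = 0" if i: "i < d" and j: "j < d" for i j
    proof (rule AI_span[OF V us _ j])
      show "\<forall>k<d. (\<Sum>j<d. Smat \<sigma> i j * (?p (us ! Suc k) j - ?p (us ! 0) j)) = 0"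
      proof (intro allI impI)
        fix k assume k: "k < d"
        have "(y2 + y3) (us ! Suc k, i) - (y2 + y3) (us ! 0, i) = 0" using y0 by simp
        then have "(\<Sum>j<d. Smat \<sigma> i j * ?p (us ! Suc k) j) - (\<Sum>j<d. Smat \<sigma> i j * ?p (us ! 0) j) = 0"
          using yexp[OF usX[of "Suc k"] i] yexp[OF usX[of 0] i] k by simp
        then show "(\<Sum>j<d. Smat \<sigma> i j * (?p (us ! Suc k) j - ?p (us ! 0) j)) = 0"
          by (simp add: right_diff_distrib sum_subtractf)
      qed
    qed
    have t0: "\<tau> i = 0" if i: "i < d" for i
    proof -
      have "(y2 + y3) (us ! 0, i) = 0" using y0 by simp
      then show ?thesis using yexp[OF usX[of 0] i] S0[OF i] by simp
    qed
    have s0: "\<sigma> t = 0" if t: "t \<in> Opairs d" for t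
    proof -
      obtain a b where ab: "t = (a, b)" "a < b" "b < d" using t unfolding Opairs_def by auto
      have "Smat \<sigma> a b = \<sigma> (a, b)" using ab by (simp add: Smat_def)
      then show ?thesis using S0[of a b] ab by simp
    qed
    show ?thesis
    proof
      fix k assume "k \<in> K1 \<union> K2 \<union> K3"
      then show "l k = 0"
      proof (elim UnE)
        assume "k \<in> K1" then show ?thesis using l1 unfolding K1_def by blast
      next
        assume "k \<in> K2" then show ?thesis using t0 unfolding K2_def \<tau>_def by blast
      next
        assume "k \<in> K3" then show ?thesis using s0 unfolding K3_def \<sigma>_def by blast
      qed
    qed
  qed
  have "card (K1 \<union> K2 \<union> K3) \<le> card Q"
    by (rule family_indep_card[where g=g]) (use fK1 fQ ind supp in auto)
  moreover have "card Q = card X * d" unfolding Q_def using fX by (simp add: card_cartesian_product)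
  moreover have "(d + 1) choose 2 = d + (d choose 2)"
    using binomial_Suc_Suc[of d 1] by (simp add: numeral_2_eq_2)
  ultimately show ?thesis using cK I(3) card_Opairs[of d] by (simp add: algebra_simps) (simp add: of_nat_mult[symmetric] del: of_nat_mult)
qed

lemma rank_K:
  assumes V: "finite V" and X: "X \<subseteq> V"
  shows "int (row_rank d (gp V d) (Kedges X)) = fK d (card X)"
proof -
  have fX: "finite X" using V X by (rule finite_subset[rotated])
  have lo: "fK d (card X) \<le> int (row_rank d (gp V d) (Kedges X))" by (rule K_lower[OF V X])
  have up: "int (row_rank d (gp V d) (Kedges X)) \<le> fK d (card X)"
  proof (cases "card X \<le> d + 1")
    case True
    have "row_rank d (gp V d) (Kedges X) \<le> card (Kedges X)" by (rule rank_le_card[OF finite_Kedges[OF fX]])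
    then show ?thesis using fK_le_d1[OF True] card_Kedges[OF fX] by simp
  next
    case False
    then have "d + 1 \<le> card X" by simp
    from K_upper[OF V X this] have "int (row_rank d (gp V d) (Kedges X)) \<le> int d * int (card X) - int ((d + 1) choose 2)" by simp
    then show ?thesis using False unfolding fK_def by simp
  qed
  show ?thesis using lo up by simp
qed

lemma K_modular:
  assumes V: "finite V" and X: "X \<subseteq> V" and Y: "Y \<subseteq> V"
  shows "fK d (card X) + fK d (card Y) - fK d (card (X \<inter> Y)) \<le> int (row_rank d (gp V d) (Kedges X \<union> Kedges Y))"
proof -
  let ?p = "gp V d"
  have fX: "finite X" using V X by (rule finite_subset[rotated])
  have fY: "finite Y" using V Y by (rule finite_subset[rotated])
  have fXY: "finite (X \<inter> Y)" using fX by simp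
  obtain N0 where N0: "rows_indep d ?p ({} \<union> N0)" "finite N0"
      "\<forall>e\<in>N0. e \<in> Kedges ({} \<union> (X \<inter> Y)) \<and> e \<inter> (X \<inter> Y) \<noteq> {}"
      "int (card N0) = fK d (card {} + card (X \<inter> Y)) - fK d (card {})"
    using ext_vertices[OF V fXY, where W="{}" and B="{}" and d=d] X rows_indep_empty by auto
  have N0K: "\<forall>e\<in>N0. e \<subseteq> X \<inter> Y" using N0(3) unfolding Kedges_def by auto
  have fXmY: "finite (X - Y)" using fX by simp
  obtain N1 where N1: "rows_indep d ?p (N0 \<union> N1)" "N0 \<inter> N1 = {}" "finite N1"
      "\<forall>e\<in>N1. e \<in> Kedges ((X \<inter> Y) \<union> (X - Y)) \<and> e \<inter> (X - Y) \<noteq> {}"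
      "int (card N1) = fK d (card (X \<inter> Y) + card (X - Y)) - fK d (card (X \<inter> Y))"
  proof -
    have a: "\<forall>e\<in>N0. e \<inter> (X - Y) = {}" using N0K by auto
    have b: "rows_indep d ?p N0" using N0(1) by simp
    have "\<exists>N. rows_indep d ?p (N0 \<union> N) \<and> N0 \<inter> N = {} \<and> finite N \<and>
      (\<forall>e\<in>N. e \<in> Kedges ((X \<inter> Y) \<union> (X - Y)) \<and> e \<inter> (X - Y) \<noteq> {}) \<and>
      int (card N) = fK d (card (X \<inter> Y) + card (X - Y)) - fK d (card (X \<inter> Y))"
      by (rule ext_vertices[OF V fXmY _ _ fXY _ b N0(2) a]) (use X in auto)
    then show ?thesis using that by blast
  qed
  have N01K: "\<forall>e\<in>N0 \<union> N1. e \<subseteq> X" using N0K N1(4) unfolding Kedges_def by auto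
  have fYmX: "finite (Y - X)" using fY by simp
  obtain N2 where N2: "rows_indep d ?p ((N0 \<union> N1) \<union> N2)" "(N0 \<union> N1) \<inter> N2 = {}" "finite N2"
      "\<forall>e\<in>N2. e \<in> Kedges ((X \<inter> Y) \<union> (Y - X)) \<and> e \<inter> (Y - X) \<noteq> {}"
      "int (card N2) = fK d (card (X \<inter> Y) + card (Y - X)) - fK d (card (X \<inter> Y))"
  proof -
    have a: "\<forall>e\<in>N0 \<union> N1. e \<inter> (Y - X) = {}" using N01K by auto
    have b: "finite (N0 \<union> N1)" using N0(2) N1(3) by simp
    have "\<exists>N. rows_indep d ?p ((N0 \<union> N1) \<union> N) \<and> (N0 \<union> N1) \<inter> N = {} \<and> finite N \<and>
      (\<forall>e\<in>N. e \<in> Kedges ((X \<inter> Y) \<union> (Y - X)) \<and> e \<inter> (Y - X) \<noteq> {}) \<and>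
      int (card N) = fK d (card (X \<inter> Y) + card (Y - X)) - fK d (card (X \<inter> Y))"
      by (rule ext_vertices[OF V fYmX _ _ fXY _ N1(1) b a]) (use X Y in auto)
    then show ?thesis using that by blast
  qed
  have cX: "card (X \<inter> Y) + card (X - Y) = card X"
    using fX by (metis Int_Diff_disjoint Int_Diff_Un card_Un_disjoint finite_Diff finite_Int)
  have cY: "card (X \<inter> Y) + card (Y - X) = card Y"
    using fY by (metis Int_Diff_disjoint Int_Diff_Un Int_commute card_Un_disjoint finite_Diff finite_Int)
  have KX: "(X \<inter> Y) \<union> (X - Y) = X" and KY: "(X \<inter> Y) \<union> (Y - X) = Y" by auto
  have sub: "N0 \<union> N1 \<union> N2 \<subseteq> Kedges X \<union> Kedges Y"
    using N0(3) N1(4) N2(4) Kedges_mono[of "X \<inter> Y" X] unfolding KX KY by auto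
  have "card (N0 \<union> N1 \<union> N2) = card N0 + card N1 + card N2"
    using N0(2) N1(2,3) N2(2,3) by (simp add: card_Un_disjoint)
  moreover have "card (N0 \<union> N1 \<union> N2) \<le> row_rank d ?p (Kedges X \<union> Kedges Y)"
    using rank_ge[OF _ sub N2(1)] fX fY by (simp add: finite_Kedges)
  ultimately show ?thesis using N0(4) N1(5) N2(5) cX cY fK_0[of d] by simp
qed

lemma rd_submod: "finite X \<Longrightarrow> finite Y \<Longrightarrow> rd V d (X \<union> Y) + rd V d (X \<inter> Y) \<le> rd V d X + rd V d Y"
  unfolding rd_gp by (rule rank_submod)

lemma rd_mono: "finite Y \<Longrightarrow> X \<subseteq> Y \<Longrightarrow> rd V d X \<le> rd V d Y"
  unfolding rd_gp by (rule rank_mono)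

lemma rd_le_card: "finite X \<Longrightarrow> rd V d X \<le> card X"
  unfolding rd_gp by (rule rank_le_card)

lemma rd_insert_le: "finite X \<Longrightarrow> rd V d (insert e X) \<le> rd V d X + 1"
  unfolding rd_gp by (rule rank_insert_le)

lemma rd_obtain:
  assumes "finite X"
  obtains I where "I \<subseteq> X" "rd V d I = card I" "card I = rd V d X"
proof -
  obtain I where I: "I \<subseteq> X" "rows_indep d (gp V d) I" "card I = row_rank d (gp V d) X"
    using rank_obtain[OF assms] .
  have fI: "finite I" using I(1) assms by (rule finite_subset)
  have "rd V d I = card I" unfolding rd_gp using rank_eq_card_iff[OF fI] I(2) by simp
  then show ?thesis using that I(1) I(3) unfolding rd_gp by simp
qed

lemma rd_indep_subset:
  assumes "finite Y" "rd V d Y = card Y" "X \<subseteq> Y"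
  shows "rd V d X = card X"
proof -
  have fX: "finite X" using assms(1,3) by (rule finite_subset[rotated])
  have "rows_indep d (gp V d) Y" using assms(1,2) rank_eq_card_iff unfolding rd_gp by blast
  then have "rows_indep d (gp V d) X" using rows_indep_subset assms(1,3) by blast
  then show ?thesis using rank_eq_card_iff[OF fX] unfolding rd_gp by blast
qed

lemma rd_ge_indep:
  assumes "finite Y" "rd V d X = card X" "X \<subseteq> Y"
  shows "card X \<le> rd V d Y"
proof -
  have fX: "finite X" using assms(1,3) by (rule finite_subset[rotated])
  have "rows_indep d (gp V d) X" using assms(2) rank_eq_card_iff[OF fX] unfolding rd_gp by blast
  then show ?thesis using rank_ge[OF assms(1,3)] unfolding rd_gp by blast
qed

lemma rd_union_le: "finite X \<Longrightarrow> finite Z \<Longrightarrow> rd V d (X \<union> Z) \<le> rd V d X + card Z"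
  using rd_submod[of X Z V d] rd_le_card[of Z V d] by simp

lemma cl_mono:
  assumes B: "finite B" and AB: "A \<subseteq> B" and e: "rd V d (insert e A) = rd V d A"
  shows "rd V d (insert e B) = rd V d B"
proof -
  have fA: "finite A" using B AB by (rule finite_subset[rotated])
  have "rd V d (insert e A \<union> B) + rd V d (insert e A \<inter> B) \<le> rd V d (insert e A) + rd V d B"
    using rd_submod[of "insert e A" B V d] fA B by simp
  moreover have "insert e A \<union> B = insert e B" using AB by auto
  moreover have "rd V d A \<le> rd V d (insert e A \<inter> B)" using AB B by (intro rd_mono) auto
  moreover have "rd V d B \<le> rd V d (insert e B)" using B by (intro rd_mono) auto
  ultimately show ?thesis using e by simp
qed

lemma circuit_dep: "rcircuit V d C \<Longrightarrow> rd V d C < card C"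
  unfolding rcircuit_def by simp

lemma finite_sub_Kedges: "finite V \<Longrightarrow> X \<subseteq> Kedges V \<Longrightarrow> finite X"
  using finite_Kedges finite_subset by blast

lemma circuit_lemma:
  assumes V: "finite V" and X: "X \<subseteq> Kedges V" and e: "e \<in> X" and eq: "rd V d (X - {e}) = rd V d X"
  shows "\<exists>C. rcircuit V d C \<and> C \<subseteq> X \<and> e \<in> C"
proof -
  have fX: "finite X" using V X by (rule finite_sub_Kedges)
  define SS where "SS = {S. S \<subseteq> X - {e} \<and> rd V d (insert e S) = rd V d S}"
  have "X - {e} \<in> SS" unfolding SS_def using e eq by (simp add: insert_absorb)
  define n where "n = Min (card ` SS)"
  have fSS: "finite SS" unfolding SS_def using fX by simp
  have "n \<in> card ` SS" unfolding n_def using fSS \<open>X - {e} \<in> SS\<close> by (intro Min_in) auto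
  then obtain S where S: "S \<in> SS" "card S = n" by blast
  have minS: "\<And>S'. S' \<in> SS \<Longrightarrow> card S \<le> card S'" using S(2) fSS unfolding n_def by simp
  have SX: "S \<subseteq> X - {e}" and Se: "rd V d (insert e S) = rd V d S" using S(1) unfolding SS_def by auto
  have fS: "finite S" using SX fX by (meson finite_Diff finite_subset)
  have indS: "rd V d S = card S"
  proof (rule ccontr)
    assume "rd V d S \<noteq> card S"
    then have lt: "rd V d S < card S" using rd_le_card[OF fS, of V d] by simp
    obtain I where I: "I \<subseteq> S" "rd V d I = card I" "card I = rd V d S" using rd_obtain[OF fS] .
    have "I \<noteq> S" using I lt by auto
    then obtain s where s: "s \<in> S" "s \<notin> I" using I(1) by blast
    have fS': "finite (S - {s})" using fS by simp
    have r1: "rd V d S \<le> rd V d (S - {s})" using rd_ge_indep[OF fS' I(2)] I s by auto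
    have r2: "rd V d (S - {s}) \<le> rd V d S" using fS by (intro rd_mono) auto
    have r3: "rd V d (insert e (S - {s})) \<le> rd V d (insert e S)" using fS by (intro rd_mono) auto
    have r4: "rd V d (S - {s}) \<le> rd V d (insert e (S - {s}))" using fS by (intro rd_mono) auto
    have "S - {s} \<in> SS" unfolding SS_def using SX r1 r2 r3 r4 Se by auto
    then have "card S \<le> card (S - {s})" by (rule minS)
    moreover have "0 < card S" using s fS by (auto simp: card_gt_0_iff)
    ultimately show False using s fS by (simp add: card_Diff_singleton)
  qed
  have eS: "e \<notin> S" using SX by auto
  define C where "C = insert e S"
  have "rcircuit V d C"
    unfolding rcircuit_def
  proof (intro conjI allI impI)
    show "C \<subseteq> Kedges V" unfolding C_def using SX e X by auto
    show "rd V d C < card C" unfolding C_def using Se indS eS fS by simp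
    fix C' assume C': "C' \<subset> C"
    show "rd V d C' = card C'"
    proof (cases "e \<in> C'")
      case False
      then have "C' \<subseteq> S" using C' unfolding C_def by auto
      then show ?thesis using rd_indep_subset[OF fS indS] by blast
    next
      case True
      define S' where "S' = C' - {e}"
      have S'S: "S' \<subset> S" using C' True eS unfolding S'_def C_def by auto
      have fS': "finite S'" using S'S fS by (meson finite_subset psubset_imp_subset)
      have iS': "rd V d S' = card S'" using rd_indep_subset[OF fS indS] S'S by blast
      have C'eq: "C' = insert e S'" using True unfolding S'_def by auto
      have "rd V d (insert e S') \<noteq> rd V d S'"
      proof
        assume h: "rd V d (insert e S') = rd V d S'"
        then have "S' \<in> SS" unfolding SS_def using S'S SX by auto
        then have "card S \<le> card S'" by (rule minS)
        then show False using S'S fS by (meson leD psubset_card_mono)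
      qed
      moreover have "rd V d S' \<le> rd V d (insert e S')" using fS' by (intro rd_mono) auto
      moreover have "rd V d (insert e S') \<le> rd V d S' + 1" by (rule rd_insert_le[OF fS'])
      ultimately have "rd V d (insert e S') = card S' + 1" using iS' by simp
      moreover have "e \<notin> S'" unfolding S'_def by simp
      ultimately show ?thesis using C'eq fS' by simp
    qed
  qed
  moreover have "C \<subseteq> X" unfolding C_def using SX e by auto
  ultimately show ?thesis unfolding C_def by blast
qed

lemma circuit_noncoloop:
  assumes V: "finite V" and X: "X \<subseteq> Kedges V" and C: "rcircuit V d C" "C \<subseteq> X" and e: "e \<in> C"
  shows "rd V d (X - {e}) = rd V d X"
proof -
  have fX: "finite X" using V X by (rule finite_sub_Kedges)
  have fC: "finite C" using C(2) fX by (rule finite_subset)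
  have "C - {e} \<subset> C" using e by auto
  then have i: "rd V d (C - {e}) = card (C - {e})" using C(1) unfolding rcircuit_def by blast
  have "rd V d C < card C" using C(1) by (rule circuit_dep)
  then have "rd V d C \<le> rd V d (C - {e})" using i e fC by (simp add: card_Diff_singleton)
  moreover have "rd V d (C - {e}) \<le> rd V d C" using fC by (intro rd_mono) auto
  moreover have "insert e (C - {e}) = C" using e by auto
  ultimately have "rd V d (insert e (C - {e})) = rd V d (C - {e})" by simp
  then have "rd V d (insert e (X - {e})) = rd V d (X - {e})"
    by (rule cl_mono[rotated 2]) (use fX C(2) in auto)
  moreover have "insert e (X - {e}) = X" using e C(2) by auto
  ultimately show ?thesis by simp
qed

definition cyc :: "'a set \<Rightarrow> nat \<Rightarrow> 'a set set \<Rightarrow> 'a set set" where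
  "cyc V d X = \<Union>{C. C \<subseteq> X \<and> rcircuit V d C}"

lemma cyc_subset: "cyc V d X \<subseteq> X"
  unfolding cyc_def by auto

lemma cyc_cyclic:
  assumes "X \<subseteq> Kedges V"
  shows "rcyclic V d (cyc V d X)"
proof -
  have "{C. C \<subseteq> cyc V d X \<and> rcircuit V d C} = {C. C \<subseteq> X \<and> rcircuit V d C}"
    unfolding cyc_def by auto
  then show ?thesis unfolding rcyclic_def using assms cyc_subset[of V d X] by (simp add: cyc_def)
qed

lemma cyclic_noncoloop:
  assumes V: "finite V" and D: "rcyclic V d D" and e: "e \<in> D"
  shows "rd V d (D - {e}) = rd V d D"
proof -
  have DK: "D \<subseteq> Kedges V" using D unfolding rcyclic_def by simp
  have "e \<in> \<Union>{C. C \<subseteq> D \<and> rcircuit V d C}" using D e unfolding rcyclic_def by blast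
  then obtain C where "C \<subseteq> D" "rcircuit V d C" "e \<in> C" by blast
  then show ?thesis using circuit_noncoloop[OF V DK] by blast
qed

lemma cyc_nullity:
  assumes V: "finite V" and X: "X \<subseteq> Kedges V"
  shows "int (card X) - int (rd V d X) = int (card (cyc V d X)) - int (rd V d (cyc V d X))"
proof -
  have fX: "finite X" using V X by (rule finite_sub_Kedges)
  let ?Y = "cyc V d X"
  have fY: "finite ?Y" using cyc_subset fX by (rule finite_subset)
  have coloop: "rd V d (X - {f}) \<noteq> rd V d X" if f: "f \<in> X - ?Y" for f
  proof
    assume "rd V d (X - {f}) = rd V d X"
    then obtain C where "rcircuit V d C" "C \<subseteq> X" "f \<in> C" using circuit_lemma[OF V X] f by blast
    then have "f \<in> ?Y" unfolding cyc_def by blast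
    then show False using f by simp
  qed
  have step: "rd V d (insert f Z) = rd V d Z + 1" if f: "f \<in> X - ?Y" and Z: "Z \<subseteq> X - {f}" for f Z
  proof -
    have fZ: "finite Z" using Z fX by (meson finite_Diff finite_subset)
    have "rd V d (insert f Z) \<noteq> rd V d Z"
    proof
      assume h: "rd V d (insert f Z) = rd V d Z"
      have "rd V d (insert f (X - {f})) = rd V d (X - {f})"
        by (rule cl_mono[OF _ Z h]) (use fX in simp)
      moreover have "insert f (X - {f}) = X" using f by auto
      ultimately show False using coloop[OF f] by simp
    qed
    moreover have "rd V d Z \<le> rd V d (insert f Z)" using fZ by (intro rd_mono) auto
    moreover have "rd V d (insert f Z) \<le> rd V d Z + 1" by (rule rd_insert_le[OF fZ])
    ultimately show ?thesis by simp
  qed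
  have ind: "T \<subseteq> X - ?Y \<Longrightarrow> rd V d (?Y \<union> T) = rd V d ?Y + card T" if "finite T" for T
    using that
  proof (induction T rule: finite_induct)
    case empty
    then show ?case by simp
  next
    case (insert f T)
    have "?Y \<union> T \<subseteq> X - {f}" using insert cyc_subset[of V d X] by auto
    then have "rd V d (insert f (?Y \<union> T)) = rd V d (?Y \<union> T) + 1" using step insert.prems by simp
    then show ?case using insert by simp
  qed
  have "rd V d (?Y \<union> (X - ?Y)) = rd V d ?Y + card (X - ?Y)" by (rule ind) (use fX in simp_all)
  moreover have "?Y \<union> (X - ?Y) = X" using cyc_subset by auto
  moreover have "card X = card ?Y + card (X - ?Y)"
    using fX cyc_subset[of V d X] by (metis card_Diff_subset fY add_diff_inverse_nat card_mono not_less)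
  ultimately show ?thesis by simp
qed

lemma rcl_superset: "X \<subseteq> Kedges V \<Longrightarrow> X \<subseteq> rcl V d X"
  unfolding rcl_def by (auto simp: insert_absorb)

lemma rcl_sub: "rcl V d X \<subseteq> Kedges V"
  unfolding rcl_def by auto

lemma rcl_mono:
  assumes V: "finite V" and Y: "Y \<subseteq> Kedges V" and XY: "X \<subseteq> Y"
  shows "rcl V d X \<subseteq> rcl V d Y"
proof
  fix x assume "x \<in> rcl V d X"
  then have x: "x \<in> Kedges V" "rd V d (insert x X) = rd V d X" unfolding rcl_def by auto
  have "rd V d (insert x Y) = rd V d Y"
    by (rule cl_mono[OF _ XY x(2)]) (use V Y finite_sub_Kedges in blast)
  then show "x \<in> rcl V d Y" using x unfolding rcl_def by simp
qed

lemma rcl_rank: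
  assumes V: "finite V" and X: "X \<subseteq> Kedges V"
  shows "rd V d (rcl V d X) = rd V d X"
proof -
  have fX: "finite X" using V X by (rule finite_sub_Kedges)
  have ind: "T \<subseteq> rcl V d X \<Longrightarrow> rd V d (X \<union> T) = rd V d X" if "finite T" for T
    using that
  proof (induction T rule: finite_induct)
    case empty
    then show ?case by simp
  next
    case (insert f T)
    then have f: "rd V d (insert f X) = rd V d X" unfolding rcl_def by auto
    have "rd V d (insert f (X \<union> T)) = rd V d (X \<union> T)"
      by (rule cl_mono[OF _ _ f]) (use fX insert in auto)
    then show ?case using insert by simp
  qed
  have fcl: "finite (rcl V d X)" using V rcl_sub finite_sub_Kedges by blast
  have "rd V d (X \<union> rcl V d X) = rd V d X" using ind[OF fcl] by simp
  moreover have "X \<union> rcl V d X = rcl V d X" using rcl_superset[OF X] by auto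
  ultimately show ?thesis by simp
qed

lemma nullity_mono:
  assumes V: "finite V" and Y: "Y \<subseteq> Kedges V" and XY: "X \<subseteq> Y"
  shows "int (card X) - int (rd V d X) \<le> int (card Y) - int (rd V d Y)"
proof -
  have fY: "finite Y" using V Y by (rule finite_sub_Kedges)
  have fX: "finite X" using fY XY by (rule finite_subset[rotated])
  have "rd V d (X \<union> (Y - X)) \<le> rd V d X + card (Y - X)" using fX fY by (intro rd_union_le) auto
  moreover have "X \<union> (Y - X) = Y" using XY by auto
  moreover have "card Y = card X + card (Y - X)" using fY XY
    by (metis card_Diff_subset card_mono fX le_add_diff_inverse)
  ultimately show ?thesis by simp
qed

lemma nullity_proper:
  assumes V: "finite V" and D: "rcyclic V d D" and X: "X \<subset> D"
  shows "int (card X) - int (rd V d X) \<le> int (card D) - int (rd V d D) - 1"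
proof -
  have DK: "D \<subseteq> Kedges V" using D unfolding rcyclic_def by simp
  have fD: "finite D" using V DK by (rule finite_sub_Kedges)
  obtain e where e: "e \<in> D" "e \<notin> X" using X by blast
  have "int (card X) - int (rd V d X) \<le> int (card (D - {e})) - int (rd V d (D - {e}))"
    using nullity_mono[OF V _ _, of "D - {e}" X d] DK X e by auto
  moreover have "rd V d (D - {e}) = rd V d D" by (rule cyclic_noncoloop[OF V D e(1)])
  moreover have "card (D - {e}) = card D - 1" using e fD by simp
  moreover have "card D \<ge> 1" using e fD by (metis One_nat_def Suc_leI card_gt_0_iff empty_iff)
  ultimately show ?thesis by simp
qed

lemma pp_union:
  assumes V: "finite V" and E: "rcyclic V d E" "int (rd V d E) = int (card E) - k"
    and D1: "D1 \<subseteq> E" "rcyclic V d D1" "int (rd V d D1) = int (card D1) - (k - 1)"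
    and D2: "D2 \<subseteq> E" "rcyclic V d D2" "int (rd V d D2) = int (card D2) - (k - 1)"
    and ne: "D1 \<noteq> D2"
  shows "D1 \<union> D2 = E"
proof (rule ccontr)
  assume nE: "D1 \<union> D2 \<noteq> E"
  have EK: "E \<subseteq> Kedges V" using E unfolding rcyclic_def by simp
  have fE: "finite E" using V EK by (rule finite_sub_Kedges)
  have f1: "finite D1" "finite D2" using fE D1(1) D2(1) finite_subset by blast+
  have sm: "rd V d (D1 \<union> D2) + rd V d (D1 \<inter> D2) \<le> rd V d D1 + rd V d D2" by (rule rd_submod[OF f1])
  have cu: "card (D1 \<union> D2) + card (D1 \<inter> D2) = card D1 + card D2" using f1 by (rule card_Un_Int[symmetric])
  have "D1 \<inter> D2 \<subset> D1 \<or> D1 \<inter> D2 \<subset> D2" using ne by blast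
  then have "int (card (D1 \<inter> D2)) - int (rd V d (D1 \<inter> D2)) \<le> k - 2"
  proof
    assume h: "D1 \<inter> D2 \<subset> D1"
    show ?thesis using nullity_proper[OF V D1(2) h] D1(3) by linarith
  next
    assume h: "D1 \<inter> D2 \<subset> D2"
    show ?thesis using nullity_proper[OF V D2(2) h] D2(3) by linarith
  qed
  then have "int (card (D1 \<union> D2)) - int (rd V d (D1 \<union> D2)) \<ge> k" using sm cu D1(3) D2(3) by linarith
  moreover have h: "D1 \<union> D2 \<subset> E" using nE D1(1) D2(1) by auto
  have "int (card (D1 \<union> D2)) - int (rd V d (D1 \<union> D2)) \<le> k - 1"
    using nullity_proper[OF V E(1) h] E(2) by linarith
  ultimately show False by simp
qed

definition ppD :: "'a set \<Rightarrow> nat \<Rightarrow> int \<Rightarrow> 'a set set \<Rightarrow> 'a set set set" where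
  "ppD V d k E = {D'. D' \<subseteq> E \<and> kfold_circuit V d (k - 1) D'}"

lemma pp_exists:
  assumes V: "finite V" and E: "kfold_circuit V d k E"
  shows "principal_partition V d k E ((\<lambda>D'. E - D') ` ppD V d k E)"
proof -
  let ?D = "ppD V d k E"
  let ?P = "(\<lambda>D'. E - D') ` ?D"
  have Ec: "rcyclic V d E" and Er: "int (rd V d E) = int (card E) - k" using E unfolding kfold_circuit_def by auto
  have EK: "E \<subseteq> Kedges V" using Ec unfolding rcyclic_def by simp
  have fE: "finite E" using V EK by (rule finite_sub_Kedges)
  have ne: "\<forall>A\<in>?P. A \<noteq> {}"
  proof
    fix A assume "A \<in> ?P"
    then obtain D' where D': "D' \<in> ?D" "A = E - D'" by blast
    then have "D' \<subseteq> E" "int (rd V d D') = int (card D') - (k - 1)" unfolding ppD_def kfold_circuit_def by auto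
    then have "D' \<noteq> E" using Er by auto
    then show "A \<noteq> {}" using D' \<open>D' \<subseteq> E\<close> by auto
  qed
  have un: "\<Union>?P = E"
  proof
    show "\<Union>?P \<subseteq> E" by auto
    show "E \<subseteq> \<Union>?P"
    proof
      fix e assume e: "e \<in> E"
      define D' where "D' = cyc V d (E - {e})"
      have sub: "E - {e} \<subseteq> Kedges V" using EK by auto
      have "int (card (E - {e})) - int (rd V d (E - {e})) = int (card D') - int (rd V d D')"
        unfolding D'_def by (rule cyc_nullity[OF V sub])
      moreover have "rd V d (E - {e}) = rd V d E" by (rule cyclic_noncoloop[OF V Ec e])
      moreover have "card (E - {e}) = card E - 1" using e fE by simp
      moreover have "card E \<ge> 1" using e fE by (metis One_nat_def Suc_leI card_gt_0_iff empty_iff)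
      ultimately have "int (rd V d D') = int (card D') - (k - 1)" using Er by simp
      moreover have "rcyclic V d D'" unfolding D'_def by (rule cyc_cyclic[OF sub])
      moreover have "D' \<subseteq> E - {e}" unfolding D'_def by (rule cyc_subset)
      ultimately have "D' \<in> ?D" "e \<in> E - D'" using e unfolding ppD_def kfold_circuit_def by auto
      then show "e \<in> \<Union>?P" by blast
    qed
  qed
  have dj: "\<forall>A\<in>?P. \<forall>B\<in>?P. A \<noteq> B \<longrightarrow> A \<inter> B = {}"
  proof (intro ballI impI)
    fix A B assume A: "A \<in> ?P" and B: "B \<in> ?P" and AB: "A \<noteq> B"
    obtain D1 where D1: "D1 \<in> ?D" "A = E - D1" using A by blast
    obtain D2 where D2: "D2 \<in> ?D" "B = E - D2" using B by blast
    have "D1 \<noteq> D2" using AB D1 D2 by auto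
    then have "D1 \<union> D2 = E" using pp_union[OF V Ec Er] D1(1) D2(1) unfolding ppD_def kfold_circuit_def by auto
    then show "A \<inter> B = {}" using D1 D2 by auto
  qed
  have im: "(\<lambda>A. E - A) ` ?P = {D'. D' \<subseteq> E \<and> kfold_circuit V d (k - 1) D'}"
  proof -
    have "(\<lambda>A. E - A) ` ?P = (\<lambda>D'. E - (E - D')) ` ?D" by (simp add: image_image)
    also have "\<dots> = id ` ?D" by (rule image_cong[OF refl]) (auto simp: ppD_def)
    also have "\<dots> = ?D" by simp
    finally show ?thesis unfolding ppD_def .
  qed
  show ?thesis unfolding principal_partition_def by (intro conjI; fact)
qed

lemma Kedges_INTER:
  assumes "Q \<noteq> {}"
  shows "(\<Inter>A\<in>Q. Kedges (W A)) = Kedges (\<Inter>A\<in>Q. W A)"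
  using assms unfolding Kedges_def by auto

lemma chain:
  assumes V: "finite V" and d: "d \<ge> 1" and EK: "E \<subseteq> Kedges V" and fP: "finite P"
    and disj: "\<forall>A\<in>P. \<forall>B\<in>P. A \<noteq> B \<longrightarrow> A \<inter> B = {}"
    and sub: "\<forall>A\<in>P. A \<subseteq> E"
    and clK: "\<forall>A\<in>P. rcl V d (E - A) = Kedges (W A) \<and> W A \<subseteq> V"
    and rk: "\<forall>A\<in>P. int (rd V d (E - A)) = int (rd V d E) - int (card A) + 1"
    and Q: "Q \<subseteq> P" "Q \<noteq> {}"
  shows "int (rd V d (\<Inter>A\<in>Q. rcl V d (E - A))) = int (rd V d E) - (\<Sum>A\<in>Q. int (card A) - 1)"
proof -
  have fQ: "finite Q" using fP Q(1) by (rule finite_subset[rotated])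
  have fE: "finite E" using V EK by (rule finite_sub_Kedges)
  have fclE: "finite (rcl V d E)" using V rcl_sub finite_sub_Kedges by blast
  have rclE: "rd V d (rcl V d E) = rd V d E" by (rule rcl_rank[OF V EK])
  have clsub: "rcl V d (E - A) \<subseteq> rcl V d E" for A by (rule rcl_mono[OF V EK]) auto
  have rdK: "int (rd V d (Kedges X)) = fK d (card X)" if "X \<subseteq> V" for X
    unfolding rd_gp using rank_K[OF V that] .
  show ?thesis using fQ Q(2) Q(1)
  proof (induction Q rule: finite_ne_induct)
    case (singleton A)
    have "E - A \<subseteq> Kedges V" using EK by auto
    then show ?case using rk singleton rcl_rank[OF V, of "E - A" d] by auto
  next
    case (insert A Q)
    define U where "U = (\<Inter>B\<in>Q. W B)"
    have AP: "A \<in> P" and QP: "Q \<subseteq> P" using insert.prems by auto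
    have UV: "U \<subseteq> V" unfolding U_def using insert.hyps(2) QP clK by blast
    have WV: "W A \<subseteq> V" using clK AP by blast
    have G: "(\<Inter>B\<in>Q. rcl V d (E - B)) = Kedges U"
    proof -
      have "(\<Inter>B\<in>Q. rcl V d (E - B)) = (\<Inter>B\<in>Q. Kedges (W B))"
      proof (rule INF_cong[OF refl])
        fix B assume "B \<in> Q"
        then have "B \<in> P" using QP by blast
        then show "rcl V d (E - B) = Kedges (W B)" using clK by blast
      qed
      also have "\<dots> = Kedges U" unfolding U_def by (rule Kedges_INTER[OF insert.hyps(2)])
      finally show ?thesis .
    qed
    have F: "rcl V d (E - A) = Kedges (W A)" using clK AP by blast
    have GF: "(\<Inter>B\<in>insert A Q. rcl V d (E - B)) = Kedges (W A \<inter> U)"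
    proof -
      have "(\<Inter>B\<in>insert A Q. rcl V d (E - B)) = rcl V d (E - A) \<inter> (\<Inter>B\<in>Q. rcl V d (E - B))" by simp
      then show ?thesis using G F Kedges_Int[of "W A" U] by simp
    qed
    have fKU: "finite (Kedges U)" "finite (Kedges (W A))"
      using UV WV V by (meson finite_Kedges finite_subset)+
    have sm: "rd V d (Kedges U \<union> Kedges (W A)) + rd V d (Kedges U \<inter> Kedges (W A)) \<le> rd V d (Kedges U) + rd V d (Kedges (W A))"
      by (rule rd_submod[OF fKU])
    have EU: "E \<subseteq> Kedges U \<union> Kedges (W A)"
    proof
      fix x assume x: "x \<in> E"
      show "x \<in> Kedges U \<union> Kedges (W A)"
      proof (cases "x \<in> A")
        case True
        have "x \<in> rcl V d (E - B)" if B: "B \<in> Q" for B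
        proof -
          have "B \<in> P" "B \<noteq> A" using B QP insert.hyps(3) by auto
          then have "x \<notin> B" using disj AP True by blast
          then have "x \<in> E - B" using x by simp
          then show ?thesis using rcl_superset[of "E - B" V d] EK by auto
        qed
        then show ?thesis using G by auto
      next
        case False
        then have "x \<in> E - A" using x by simp
        then show ?thesis using rcl_superset[of "E - A" V d] EK F by auto
      qed
    qed
    have up1: "rd V d E \<le> rd V d (Kedges U \<union> Kedges (W A))"
      using fKU EU by (intro rd_mono) auto
    obtain B0 where B0: "B0 \<in> Q" using insert.hyps(2) by blast
    have "Kedges U \<subseteq> rcl V d E" using G clsub B0 by blast
    moreover have "Kedges (W A) \<subseteq> rcl V d E" using F clsub by metis
    ultimately have up2: "rd V d (Kedges U \<union> Kedges (W A)) \<le> rd V d E"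
      using rd_mono[OF fclE, of "Kedges U \<union> Kedges (W A)" V d] rclE by simp
    have mod: "fK d (card U) + fK d (card (W A)) - fK d (card (U \<inter> W A)) \<le> int (rd V d (Kedges U \<union> Kedges (W A)))"
      unfolding rd_gp by (rule K_modular[OF V UV WV])
    have KI: "Kedges U \<inter> Kedges (W A) = Kedges (W A \<inter> U)" using Kedges_Int by auto
    have eq: "int (rd V d (Kedges (W A \<inter> U))) = int (rd V d (Kedges U)) + int (rd V d (Kedges (W A))) - int (rd V d E)"
    proof -
      have "W A \<inter> U \<subseteq> V" using WV by auto
      then have a: "int (rd V d (Kedges (W A \<inter> U))) = fK d (card (U \<inter> W A))"
        using rdK[of "W A \<inter> U"] by (simp add: Int_commute)
      have b: "int (rd V d (Kedges U)) = fK d (card U)" using rdK UV by simp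
      have c: "int (rd V d (Kedges (W A))) = fK d (card (W A))" using rdK WV by simp
      have sm': "int (rd V d (Kedges U \<union> Kedges (W A))) + int (rd V d (Kedges (W A \<inter> U))) \<le> int (rd V d (Kedges U)) + int (rd V d (Kedges (W A)))"
        using sm KI by simp
      have u1: "int (rd V d E) \<le> int (rd V d (Kedges U \<union> Kedges (W A)))" using up1 by simp
      have u2: "int (rd V d (Kedges U \<union> Kedges (W A))) \<le> int (rd V d E)" using up2 by simp
      show ?thesis using sm' u1 u2 mod a b c by linarith
    qed
    have IH: "int (rd V d (Kedges U)) = int (rd V d E) - (\<Sum>B\<in>Q. int (card B) - 1)"
      using insert.IH QP G by simp
    have "rd V d (rcl V d (E - A)) = rd V d (E - A)" by (rule rcl_rank[OF V]) (use EK in auto)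
    then have rA: "int (rd V d (Kedges (W A))) = int (rd V d E) - int (card A) + 1"
      using rk AP F by simp
    have "(\<Sum>B\<in>insert A Q. int (card B) - 1) = (int (card A) - 1) + (\<Sum>B\<in>Q. int (card B) - 1)"
      using insert.hyps(1,3) by simp
    then show ?case using GF eq IH rA by simp
  qed
qed

lemma rigid_closure:
  assumes V: "finite V" and d: "d \<ge> 1" and DK: "D' \<subseteq> Kedges V" and cyc: "rcyclic V d D'" and rig: "rrigid V d D'"
  shows "rcl V d D' = Kedges (span_verts D') \<and> span_verts D' \<subseteq> V"
proof -
  define W where "W = span_verts D'"
  have WV: "W \<subseteq> V" unfolding W_def span_verts_def using DK unfolding Kedges_def by auto
  have DW: "D' \<subseteq> Kedges W" unfolding W_def span_verts_def using DK unfolding Kedges_def by auto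
  have fW: "finite W" using V WV by (rule finite_subset[rotated])
  have rK: "int (rd V d (Kedges W)) = fK d (card W)" unfolding rd_gp by (rule rank_K[OF V WV])
  have eq: "rd V d D' = rd V d (Kedges W)"
  proof (cases "D' = {}")
    case True
    then have "W = {}" unfolding W_def span_verts_def by simp
    then have "Kedges W = {}" unfolding Kedges_def by auto
    then show ?thesis using True by simp
  next
    case False
    then obtain C where C: "C \<subseteq> D'" "rcircuit V d C" using cyc unfolding rcyclic_def by blast
    have big: "\<not> card W \<le> d + 1"
    proof
      assume cw: "card W \<le> d + 1"
      have "int (rd V d (Kedges W)) = int (card (Kedges W))"
        using rK fK_le_d1[OF cw] card_Kedges[OF fW] by simp
      then have "rd V d (Kedges W) = card (Kedges W)" by simp
      then have "rd V d C = card C" using rd_indep_subset[OF finite_Kedges[OF fW]] C(1) DW by blast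
      then show False using circuit_dep[OF C(2)] by simp
    qed
    then have "int (rd V d D') = int d * int (card W) - int ((d + 1) choose 2)"
      using rig unfolding rrigid_def W_def by auto
    then show ?thesis using rK big unfolding fK_def by simp
  qed
  have "rcl V d D' = Kedges W"
    by (rule closure_complete[OF V d WV DW]) (use eq in \<open>simp add: rd_gp\<close>)
  then show ?thesis using WV unfolding W_def by simp
qed

theorem theorem3p16:
  fixes V :: "'a set" and E :: "'a set set" and d k :: nat
  assumes "finite V" and "E \<subseteq> Kedges V"
    and "d \<ge> 1" and "k \<ge> 1"
    and "kfold_circuit V d (int k) E"
    and "\<forall>D'. D' \<subseteq> E \<and> kfold_circuit V d (int k - 1) D' \<longrightarrow> rrigid V d D'"
  shows "balanced V d (int k) E"
proof -
  note V = assms(1) and EK = assms(2) and d = assms(3) and kf = assms(5) and rig = assms(6)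
  define P where "P = (\<lambda>D'. E - D') ` ppD V d (int k) E"
  have pp: "principal_partition V d (int k) E P" unfolding P_def by (rule pp_exists[OF V kf])
  then have ne: "\<forall>A\<in>P. A \<noteq> {}" and un: "\<Union>P = E" and dj: "\<forall>A\<in>P. \<forall>B\<in>P. A \<noteq> B \<longrightarrow> A \<inter> B = {}"
    unfolding principal_partition_def by auto
  have Er: "int (rd V d E) = int (card E) - int k" using kf unfolding kfold_circuit_def by simp
  have fE: "finite E" using V EK by (rule finite_sub_Kedges)
  have sub: "\<forall>A\<in>P. A \<subseteq> E" using un by blast
  have fP: "finite P"
  proof -
    have "P \<subseteq> Pow E" using sub by auto
    moreover have "finite (Pow E)" using fE by simp
    ultimately show ?thesis by (rule finite_subset)
  qed
  have memD: "E - A \<in> ppD V d (int k) E" if A: "A \<in> P" for A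
  proof -
    obtain D' where D': "D' \<in> ppD V d (int k) E" "A = E - D'" using A unfolding P_def by blast
    then have "D' \<subseteq> E" unfolding ppD_def by simp
    then have "E - A = D'" using D'(2) by auto
    then show ?thesis using D'(1) by simp
  qed
  define W where "W A = span_verts (E - A)" for A
  have clK: "\<forall>A\<in>P. rcl V d (E - A) = Kedges (W A) \<and> W A \<subseteq> V"
  proof
    fix A assume A: "A \<in> P"
    have m: "E - A \<subseteq> E" "kfold_circuit V d (int k - 1) (E - A)" using memD[OF A] unfolding ppD_def by auto
    then have "rrigid V d (E - A)" using rig by blast
    moreover have "rcyclic V d (E - A)" using m unfolding kfold_circuit_def by simp
    moreover have "E - A \<subseteq> Kedges V" using EK by auto
    ultimately show "rcl V d (E - A) = Kedges (W A) \<and> W A \<subseteq> V"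
      unfolding W_def using rigid_closure[OF V d] by blast
  qed
  have rk: "\<forall>A\<in>P. int (rd V d (E - A)) = int (rd V d E) - int (card A) + 1"
  proof
    fix A assume A: "A \<in> P"
    have r1: "int (rd V d (E - A)) = int (card (E - A)) - (int k - 1)"
      using memD[OF A] unfolding ppD_def kfold_circuit_def by simp
    have AE: "A \<subseteq> E" using sub A by blast
    have fA: "finite A" using AE fE by (rule finite_subset)
    have r2: "card (E - A) = card E - card A" by (rule card_Diff_subset[OF fA AE])
    have r3: "card A \<le> card E" by (rule card_mono[OF fE AE])
    show "int (rd V d (E - A)) = int (rd V d E) - int (card A) + 1" using r1 r2 r3 Er by simp
  qed
  have "E \<noteq> {}"
  proof
    assume "E = {}"
    then show False using Er assms(4) by simp
  qed
  then have Pne: "P \<noteq> {}" using un by auto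
  have ch: "int (rd V d (\<Inter>A\<in>P. rcl V d (E - A))) = int (rd V d E) - (\<Sum>A\<in>P. int (card A) - 1)"
    by (rule chain[OF V d EK fP dj sub clK rk subset_refl Pne])
  have "card E = (\<Sum>A\<in>P. card A)"
  proof -
    have "card (\<Union>P) = (\<Sum>A\<in>P. card A)"
    proof (rule card_Union_disjoint)
      show "pairwise disjnt P" using dj unfolding pairwise_def disjnt_def by blast
      fix A assume "A \<in> P"
      then have "A \<subseteq> E" using sub by blast
      then show "finite A" using fE by (rule finite_subset)
    qed
    then show ?thesis using un by simp
  qed
  then have "(\<Sum>A\<in>P. int (card A) - 1) = int (card E) - int (card P)"
    by (simp add: sum_subtractf)
  then have "int (rd V d (\<Inter>A\<in>P. rcl V d (E - A))) = int (card P) - int k" using ch Er by simp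
  then show ?thesis unfolding balanced_def using pp by blast
qed

end
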